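(* Let $A_4$ be the Cayley-Dickson algebra of sedenions with canonical basis $e_0,\dots,e_{15}$. Then: (i) the imaginary units lying on no defective triple are exactly $e_1,e_2,e_4,e_8,e_{15}$, and each of the remaining ten imaginary units $e_3,e_5,e_6,e_7,e_9,e_{10},e_{11},e_{12},e_{13},e_{14}$ lies on exactly three defective triples (and four ordinary ones); (ii) the incidence structure $\mathcal{D}$ whose points are these ten units and whose lines are the ten defective triples is isomorphic to the Desargues configuration $G_2(5)$; (iii) there is a bijection $\varphi$ from the set of geometric hyperplanes of $\mathcal{D}$ onto $\{e_1,\dots,e_{15}\}$ mapping the set of lines of the Veldkamp space $\mathcal{V}(\mathcal{D})$ bijectively onto the set of distinguished triples of $A_4$ (so $\mathcal{V}(\mathcal{D})\cong\mathrm{PG}(3,2)$), such that a geometric hyperplane has $4$ points (a point together with the three points not collinear with it) if and only if its image lies on some defective triple, and has $6$ points (a copy of the Pasch configuration $G_2(4)$) if and only if its image is one of $e_1,e_2,e_4,e_8,e_{15}$.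
   Context: Cayley-Dickson algebras: $A_0=\mathbb{R}$ with trivial conjugation; $A_{N+1}$ is the set of ordered pairs $(x,y)$ with $x,y\in A_N$, with conjugation $(x,y)^*=(x^*,-y)$ and multiplication $(x,y)(X,Y)=(xX-Yy^*,\,x^*Y+Xy)$. The canonical basis of $A_0$ is $e_0=1$; if $e_0,\dots,e_{2^N-1}$ is the canonical basis of $A_N$, the canonical basis of $A_{N+1}$ is $e_a=(e_a,0)$ and $e_{2^N+a}=(0,e_a)$ for $0\le a\le 2^N-1$. The imaginary units of $A_N$ are $e_1,\dots,e_{2^N-1}$. A distinguished triple is a set $\{e_a,e_b,e_c\}$ with $1\le a<b<c\le 2^N-1$ and $e_ae_b=\pm e_c$; it is called ordinary if $a+b=c$ and defective if $a+b\neq c$. The combinatorial Grassmannian $G_2(n)$ is the point-line incidence structure whose points are the $2$-element subsets of $\{1,\dots,n\}$, whose lines are the $3$-element subsets, incidence being inclusion ($G_2(4)$ is the Pasch configuration, $G_2(5)$ the Desargues configuration). A geometric hyperplane of a point-line incidence structure is a proper subset $H$ of the point set such that every line is either contained in $H$ or meets $H$ in exactly one point. The Veldkamp space $\mathcal{V}(\mathcal{C})$ has as points the geometric hyperplanes of $\mathcal{C}$; for distinct hyperplanes $H',H''$ the Veldkamp line $H'H''$ is the set of all geometric hyperplanes $H$ with $H=H'$, $H=H''$, or $H'\cap H''=H'\cap H=H''\cap H$. *)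

theory Defs
  imports Complex_Main
begin

text \<open>An element of A_N is represented by its coordinate function
  nat => real with respect to the canonical basis, supported on indices < 2^N.
  The pair (x,y) of A_(N+1) has coordinates of x at indices < 2^N and those of y
  at indices 2^N + i.\<close>

definition cd_lo :: "nat \<Rightarrow> (nat \<Rightarrow> real) \<Rightarrow> (nat \<Rightarrow> real)" where
  "cd_lo N x = (\<lambda>i. if i < 2^N then x i else 0)"

definition cd_hi :: "nat \<Rightarrow> (nat \<Rightarrow> real) \<Rightarrow> (nat \<Rightarrow> real)" where
  "cd_hi N x = (\<lambda>i. if i < 2^N then x (2^N + i) else 0)"

definition cd_pair :: "nat \<Rightarrow> (nat \<Rightarrow> real) \<Rightarrow> (nat \<Rightarrow> real) \<Rightarrow> (nat \<Rightarrow> real)" where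
  "cd_pair N a b = (\<lambda>i. if i < 2^N then a i else if i < 2 * 2^N then b (i - 2^N) else 0)"

fun cd_conj :: "nat \<Rightarrow> (nat \<Rightarrow> real) \<Rightarrow> (nat \<Rightarrow> real)" where
  "cd_conj 0 x = (\<lambda>i. if i = 0 then x 0 else 0)"
| "cd_conj (Suc N) x = cd_pair N (cd_conj N (cd_lo N x)) (\<lambda>i. - cd_hi N x i)"

text \<open>(x,y)(X,Y) = (xX - Y y^*, x^* Y + X y)\<close>
fun cd_mult :: "nat \<Rightarrow> (nat \<Rightarrow> real) \<Rightarrow> (nat \<Rightarrow> real) \<Rightarrow> (nat \<Rightarrow> real)" where
  "cd_mult 0 p q = (\<lambda>i. if i = 0 then p 0 * q 0 else 0)"
| "cd_mult (Suc N) p q =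
     (let x = cd_lo N p; y = cd_hi N p; X = cd_lo N q; Y = cd_hi N q
      in cd_pair N (\<lambda>i. cd_mult N x X i - cd_mult N Y (cd_conj N y) i)
                   (\<lambda>i. cd_mult N (cd_conj N x) Y i + cd_mult N X y i))"

definition cd_basis :: "nat \<Rightarrow> (nat \<Rightarrow> real)" where
  "cd_basis a = (\<lambda>i. if i = a then 1 else 0)"

text \<open>Imaginary units are identified with their indices 1 .. 2^N - 1; a triple
  {e_a, e_b, e_c} is identified with the index set {a, b, c}.\<close>

definition dist_triple :: "nat \<Rightarrow> nat set \<Rightarrow> bool" where
  "dist_triple N t \<longleftrightarrow> (\<exists>a b c. t = {a, b, c} \<and> 1 \<le> a \<and> a < b \<and> b < c \<and> c \<le> 2^N - 1 \<and>
      (cd_mult N (cd_basis a) (cd_basis b) = cd_basis c \<or>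
       cd_mult N (cd_basis a) (cd_basis b) = (\<lambda>i. - cd_basis c i)))"

definition ordinary_triple :: "nat \<Rightarrow> nat set \<Rightarrow> bool" where
  "ordinary_triple N t \<longleftrightarrow> (\<exists>a b c. t = {a, b, c} \<and> 1 \<le> a \<and> a < b \<and> b < c \<and> c \<le> 2^N - 1 \<and>
      (cd_mult N (cd_basis a) (cd_basis b) = cd_basis c \<or>
       cd_mult N (cd_basis a) (cd_basis b) = (\<lambda>i. - cd_basis c i)) \<and> a + b = c)"

definition defective_triple :: "nat \<Rightarrow> nat set \<Rightarrow> bool" where
  "defective_triple N t \<longleftrightarrow> (\<exists>a b c. t = {a, b, c} \<and> 1 \<le> a \<and> a < b \<and> b < c \<and> c \<le> 2^N - 1 \<and>
      (cd_mult N (cd_basis a) (cd_basis b) = cd_basis c \<or>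
       cd_mult N (cd_basis a) (cd_basis b) = (\<lambda>i. - cd_basis c i)) \<and> a + b \<noteq> c)"

definition inc_iso ::
  "'p set \<Rightarrow> 'l set \<Rightarrow> ('p \<Rightarrow> 'l \<Rightarrow> bool) \<Rightarrow> 'q set \<Rightarrow> 'm set \<Rightarrow> ('q \<Rightarrow> 'm \<Rightarrow> bool) \<Rightarrow> bool" where
  "inc_iso P L I Q M J \<longleftrightarrow> (\<exists>f g. bij_betw f P Q \<and> bij_betw g L M \<and>
      (\<forall>p\<in>P. \<forall>l\<in>L. I p l \<longleftrightarrow> J (f p) (g l)))"

definition G2_points :: "nat \<Rightarrow> nat set set" where
  "G2_points n = {s. s \<subseteq> {1..n} \<and> card s = 2}"
definition G2_lines :: "nat \<Rightarrow> nat set set" where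
  "G2_lines n = {s. s \<subseteq> {1..n} \<and> card s = 3}"

definition geom_hyperplane :: "'p set \<Rightarrow> 'p set set \<Rightarrow> 'p set \<Rightarrow> bool" where
  "geom_hyperplane P L H \<longleftrightarrow> H \<subset> P \<and>
     (\<forall>l\<in>L. l \<subseteq> H \<or> card (l \<inter> H) = 1)"

definition hyperplanes :: "'p set \<Rightarrow> 'p set set \<Rightarrow> 'p set set" where
  "hyperplanes P L = {H. geom_hyperplane P L H}"

definition veldkamp_line :: "'p set \<Rightarrow> 'p set set \<Rightarrow> 'p set \<Rightarrow> 'p set \<Rightarrow> 'p set set" where
  "veldkamp_line P L H1 H2 = {H. geom_hyperplane P L H \<and>
     (H = H1 \<or> H = H2 \<or> (H1 \<inter> H2 = H1 \<inter> H \<and> H1 \<inter> H = H2 \<inter> H))}"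

definition veldkamp_lines :: "'p set \<Rightarrow> 'p set set \<Rightarrow> 'p set set set" where
  "veldkamp_lines P L = {veldkamp_line P L H1 H2 | H1 H2.
     geom_hyperplane P L H1 \<and> geom_hyperplane P L H2 \<and> H1 \<noteq> H2}"

definition collinear :: "'p set set \<Rightarrow> 'p \<Rightarrow> 'p \<Rightarrow> bool" where
  "collinear L p q \<longleftrightarrow> (\<exists>l\<in>L. p \<in> l \<and> q \<in> l)"

definition sed_def_triples :: "nat set set" where
  "sed_def_triples = {t. defective_triple 4 t}"

definition D_points :: "nat set" where
  "D_points = {a \<in> {1..15}. \<exists>t. defective_triple 4 t \<and> a \<in> t}"

end

theory Submission
  imports Defs
begin


definition sb :: "real \<Rightarrow> nat \<Rightarrow> nat \<Rightarrow> real" where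
  "sb s k = (\<lambda>i. if i = k then s else 0)"

fun ix :: "nat \<Rightarrow> nat \<Rightarrow> nat \<Rightarrow> nat" where
  "ix 0 a b = 0"
| "ix (Suc N) a b = (if a < 2^N \<and> b < 2^N then ix N a b
     else if a < 2^N then 2^N + ix N a (b - 2^N)
     else if b < 2^N then 2^N + ix N b (a - 2^N)
     else ix N (b - 2^N) (a - 2^N))"

definition cs :: "nat \<Rightarrow> real" where "cs a = (if a = 0 then 1 else -1)"

fun sg :: "nat \<Rightarrow> nat \<Rightarrow> nat \<Rightarrow> real" where
  "sg 0 a b = 1"
| "sg (Suc N) a b = (if a < 2^N \<and> b < 2^N then sg N a b
     else if a < 2^N then cs a * sg N a (b - 2^N)
     else if b < 2^N then sg N b (a - 2^N)
     else - cs (a - 2^N) * sg N (b - 2^N) (a - 2^N))"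

lemma sg_pm: "sg N a b = 1 \<or> sg N a b = -1"
  by (induction N a b rule: sg.induct) (auto simp: cs_def)

lemma ix_lt: "a < 2^N \<Longrightarrow> b < 2^N \<Longrightarrow> ix N a b < 2^N"
proof (induction N a b rule: ix.induct)
  case (2 N a b)
  have h: "a < 2^N \<or> a - 2^N < 2^N" "b < 2^N \<or> b - 2^N < 2^N" using "2.prems" by auto
  have "a < 2^N \<Longrightarrow> b < 2^N \<Longrightarrow> ix N a b < 2^N" using 2 by auto
  moreover have "a < 2^N \<Longrightarrow> b \<ge> 2^N \<Longrightarrow> ix N a (b - 2^N) < 2^N" using 2 h by auto
  moreover have "b < 2^N \<Longrightarrow> a \<ge> 2^N \<Longrightarrow> ix N b (a - 2^N) < 2^N" using 2 h by auto
  moreover have "a \<ge> 2^N \<Longrightarrow> b \<ge> 2^N \<Longrightarrow> ix N (b - 2^N) (a - 2^N) < 2^N" using 2 h by auto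
  ultimately show ?case by (cases "a < 2^N"; cases "b < 2^N") (auto simp: not_less)
qed simp

abbreviation z :: "nat \<Rightarrow> real" where "z \<equiv> (\<lambda>_. 0)"

lemma lohi_z: "cd_lo N z = z" "cd_hi N z = z" by (auto simp: cd_lo_def cd_hi_def)

lemma conj_z: "cd_conj N z = z"
  by (induction N) (auto simp: cd_pair_def lohi_z)

lemma mult_z: "cd_mult N z q = z \<and> cd_mult N p z = z"
proof (induction N arbitrary: p q)
  case 0 then show ?case by auto
next
  case (Suc N)
  have i1: "\<And>q. cd_mult N z q = z" and i2: "\<And>p. cd_mult N p z = z" using Suc by auto
  show ?case apply (simp add: Let_def cd_pair_def)
    apply (simp only: lohi_z)
    apply (simp only: i1 i2 conj_z)
    by (simp add: fun_eq_iff)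
qed

lemma mult_z1: "cd_mult N z q = z" using mult_z by blast
lemma mult_z2: "cd_mult N p z = z" using mult_z by blast

lemma sb0: "sb 0 k = z" by (auto simp: sb_def)

lemma lo_sb: "cd_lo N (sb s a) = (if a < 2^N then sb s a else z)"
  by (auto simp: cd_lo_def sb_def)

lemma hi_sb: "a < 2 * 2^N \<Longrightarrow> cd_hi N (sb s a) = (if a < 2^N then z else sb s (a - 2^N))"
  by (auto simp: cd_hi_def sb_def fun_eq_iff)

lemma pair1: "k < 2^N \<Longrightarrow> cd_pair N (sb u k) z = sb u k"
  by (auto simp: cd_pair_def sb_def)
lemma pair2: "k < 2^N \<Longrightarrow> cd_pair N z (sb u k) = sb u (2^N + k)"
  by (auto simp: cd_pair_def sb_def fun_eq_iff)

lemma conj_sb: "a < 2^N \<Longrightarrow> cd_conj N (sb s a) = sb (s * cs a) a"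
proof (induction N arbitrary: s a)
  case 0 then show ?case by (auto simp: sb_def cs_def)
next
  case (Suc N)
  show ?case
  proof (cases "a < 2^N")
    case True
    then show ?thesis using Suc
      by (simp add: lo_sb hi_sb pair1 sb0[symmetric] del: sb0)
  next
    case False
    then have "cd_conj (Suc N) (sb s a) = cd_pair N z (sb (-s) (a - 2^N))"
      using Suc.prems by (simp add: lo_sb hi_sb conj_z) (simp add: sb_def fun_eq_iff cd_pair_def)
    also have "\<dots> = sb (s * cs a) a" using False Suc.prems
      by (subst pair2) (auto simp: cs_def)
    finally show ?thesis .
  qed
qed

lemma mult_sb: "a < 2^N \<Longrightarrow> b < 2^N \<Longrightarrow>
  cd_mult N (sb s a) (sb t b) = sb (s * t * sg N a b) (ix N a b)"
proof (induction N arbitrary: s t a b)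
  case 0 then show ?case by (auto simp: sb_def fun_eq_iff)
next
  case (Suc N)
  note lh = lo_sb hi_sb[OF Suc.prems(1)[simplified]] hi_sb[OF Suc.prems(2)[simplified]]
  show ?case
  proof (cases "a < 2^N")
    case a: True
    show ?thesis
    proof (cases "b < 2^N")
      case b: True
      have "cd_mult (Suc N) (sb s a) (sb t b) = cd_pair N (\<lambda>i. cd_mult N (sb s a) (sb t b) i - 0) (\<lambda>i. 0 + 0)"
        using a b by (simp add: Let_def lh mult_z1 mult_z2 conj_z)
      also have "\<dots> = sb (s * t * sg N a b) (ix N a b)" using Suc.IH[OF a b] ix_lt[OF a b]
        by (simp add: fun_eq_iff cd_pair_def sb_def)
      finally show ?thesis using a b by simp
    next
      case b: False
      have b': "b - 2^N < 2^N" using Suc.prems b by simp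
      have "cd_mult (Suc N) (sb s a) (sb t b) = cd_pair N (\<lambda>i. 0 - 0) (\<lambda>i. cd_mult N (sb (s * cs a) a) (sb t (b - 2^N)) i + 0)"
        using a b by (simp add: Let_def lh mult_z1 mult_z2 conj_z conj_sb)
      also have "\<dots> = sb (s * t * sg (Suc N) a b) (ix (Suc N) a b)" using Suc.IH[OF a b'] ix_lt[OF a b'] a b
        by (auto simp add: fun_eq_iff cd_pair_def sb_def)
      finally show ?thesis .
    qed
  next
    case a: False
    have a': "a - 2^N < 2^N" using Suc.prems a by simp
    show ?thesis
    proof (cases "b < 2^N")
      case b: True
      have "cd_mult (Suc N) (sb s a) (sb t b) = cd_pair N (\<lambda>i. 0 - 0) (\<lambda>i. 0 + cd_mult N (sb t b) (sb s (a - 2^N)) i)"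
        using a b by (simp add: Let_def lh mult_z1 mult_z2 conj_z conj_sb)
      also have "\<dots> = sb (s * t * sg (Suc N) a b) (ix (Suc N) a b)" using Suc.IH[OF b a'] ix_lt[OF b a'] a b
        by (auto simp add: fun_eq_iff cd_pair_def sb_def)
      finally show ?thesis .
    next
      case b: False
      have b': "b - 2^N < 2^N" using Suc.prems b by simp
      have "cd_mult (Suc N) (sb s a) (sb t b) = cd_pair N (\<lambda>i. 0 - cd_mult N (sb t (b - 2^N)) (sb (s * cs (a - 2^N)) (a - 2^N)) i) (\<lambda>i. 0 + 0)"
        using a b a' b' by (simp add: Let_def lh mult_z1 mult_z2 conj_z conj_sb)
      also have "\<dots> = sb (s * t * sg (Suc N) a b) (ix (Suc N) a b)" using Suc.IH[OF b' a'] ix_lt[OF b' a'] a b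
        by (auto simp add: fun_eq_iff cd_pair_def sb_def)
      finally show ?thesis .
    qed
  qed
qed


definition DT :: "nat set set" where "DT = {{3, 5, 6}, {3, 9, 10}, {3, 13, 14}, {5, 9, 12}, {5, 11, 14}, {6, 10, 12}, {6, 11, 13}, {7, 9, 14}, {7, 10, 13}, {7, 11, 12}}"
definition OT :: "nat set set" where "OT = {{1, 2, 3}, {1, 4, 5}, {1, 6, 7}, {1, 8, 9}, {1, 10, 11}, {1, 12, 13}, {1, 14, 15}, {2, 4, 6}, {2, 5, 7}, {2, 8, 10}, {2, 9, 11}, {2, 12, 14}, {2, 13, 15}, {3, 4, 7}, {3, 8, 11}, {3, 12, 15}, {4, 8, 12}, {4, 9, 13}, {4, 10, 14}, {4, 11, 15}, {5, 8, 13}, {5, 10, 15}, {6, 8, 14}, {6, 9, 15}, {7, 8, 15}}"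
definition DP :: "nat set" where "DP = {3, 5, 6, 7, 9, 10, 11, 12, 13, 14}"

lemma basis_sb: "cd_basis a = sb 1 a" by (simp add: cd_basis_def sb_def)
lemma neg_basis: "(\<lambda>i. - cd_basis c i) = sb (-1) c" by (simp add: cd_basis_def sb_def fun_eq_iff)
lemma sb_eq: "u \<noteq> 0 \<Longrightarrow> sb u k = sb v c \<longleftrightarrow> u = v \<and> k = c"
  by (auto simp: sb_def fun_eq_iff)

lemma cond4: "a < 16 \<Longrightarrow> b < 16 \<Longrightarrow>
  (cd_mult 4 (cd_basis a) (cd_basis b) = cd_basis c \<or>
   cd_mult 4 (cd_basis a) (cd_basis b) = (\<lambda>i. - cd_basis c i)) \<longleftrightarrow> ix 4 a b = c"
proof -
  assume "a < 16" "b < 16"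
  then have m: "cd_mult 4 (sb 1 a) (sb 1 b) = sb (sg 4 a b) (ix 4 a b)"
    using mult_sb[of a 4 b 1 1] by simp
  have "sg 4 a b \<noteq> 0" using sg_pm[of 4 a b] by auto
  then show ?thesis unfolding neg_basis unfolding basis_sb m using sb_eq sg_pm[of 4 a b] by auto
qed

lemma def_set: "{t. defective_triple 4 t} = (\<lambda>(a,b). {a,b,ix 4 a b}) ` Set.filter (\<lambda>(a,b). a<b \<and> b< ix 4 a b \<and> ix 4 a b \<le> 15 \<and> a + b \<noteq> ix 4 a b) ({1..15}\<times>{1..15})"
  (is "?L = ?R")
proof
  show "?L \<subseteq> ?R"
  proof
    fix t assume "t \<in> ?L"
    then obtain a b c where h: "t = {a,b,c}" "1 \<le> a" "a < b" "b < c" "c \<le> 15" "a + b \<noteq> c"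
      "cd_mult 4 (cd_basis a) (cd_basis b) = cd_basis c \<or>
       cd_mult 4 (cd_basis a) (cd_basis b) = (\<lambda>i. - cd_basis c i)"
      by (auto simp: defective_triple_def)
    then have "ix 4 a b = c" using cond4[of a b c] by simp
    then show "t \<in> ?R" using h by (auto intro!: image_eqI[where x="(a,b)"])
  qed
next
  show "?R \<subseteq> ?L"
  proof
    fix t assume "t \<in> ?R"
    then obtain a b where h: "t = {a,b,ix 4 a b}" "1 \<le> a" "a < b" "b < ix 4 a b" "ix 4 a b \<le> 15" "a + b \<noteq> ix 4 a b"
      by auto
    then show "t \<in> ?L" unfolding defective_triple_def using cond4[of a b "ix 4 a b"]
      by (intro CollectI exI[of _ a] exI[of _ b] exI[of _ "ix 4 a b"]) auto
  qed
qed

lemma DT_eq: "{t. defective_triple 4 t} = DT"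
  unfolding def_set DT_def by code_simp


definition HS :: "nat set set" where "HS = {{3, 5, 6, 7}, {3, 7, 11, 12}, {3, 9, 10, 11}, {3, 12, 13, 14}, {5, 7, 10, 13}, {5, 9, 12, 13}, {5, 10, 11, 14}, {6, 7, 9, 14}, {6, 9, 11, 13}, {6, 10, 12, 14}, {3, 5, 6, 9, 10, 12}, {3, 5, 6, 11, 13, 14}, {3, 7, 9, 10, 13, 14}, {5, 7, 9, 11, 12, 14}, {6, 7, 10, 11, 12, 13}}"
definition fD :: "nat \<Rightarrow> nat set" where "fD p = (if p = 3 then {1, 2} else if p = 5 then {1, 3} else if p = 6 then {2, 3} else if p = 7 then {4, 5} else if p = 9 then {1, 4} else if p = 10 then {2, 4} else if p = 11 then {3, 5} else if p = 12 then {3, 4} else if p = 13 then {2, 5} else if p = 14 then {1, 5} else {})"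

lemma hyp_filter: "hyperplanes P L = Set.filter (geom_hyperplane P L) (Pow P)"
  by (auto simp: hyperplanes_def geom_hyperplane_def)

lemma line_rule:
  assumes "x \<noteq> y" "x \<noteq> w" "y \<noteq> w" "{x,y,w} \<subseteq> H \<or> card ({x,y,w} \<inter> H) = 1"
  shows "(w \<in> H) = ((x \<in> H) = (y \<in> H))"
  using assms by (cases "x \<in> H"; cases "y \<in> H"; cases "w \<in> H") (auto simp: Int_insert_left)


lemma HS_sup: "HS \<subseteq> hyperplanes DP DT"
proof -
  have "\<forall>H\<in>HS. geom_hyperplane DP DT H"
    unfolding geom_hyperplane_def DP_def DT_def HS_def by code_simp
  then show ?thesis by (auto simp: hyperplanes_def)
qed


definition hexp :: "bool \<Rightarrow> bool \<Rightarrow> bool \<Rightarrow> bool \<Rightarrow> nat set" where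
  "hexp b3 b5 b7 b9 = (let b6 = (b3 = b5); b10 = (b3 = b9); b12 = (b5 = b9);
     b14 = (b7 = b9); b13 = (b7 = b10); b11 = (b7 = b12) in
     Set.filter (\<lambda>x. (x = 3 \<and> b3) \<or> (x = 5 \<and> b5) \<or> (x = 6 \<and> b6) \<or> (x = 7 \<and> b7)
       \<or> (x = 9 \<and> b9) \<or> (x = 10 \<and> b10) \<or> (x = 11 \<and> b11) \<or> (x = 12 \<and> b12)
       \<or> (x = 13 \<and> b13) \<or> (x = 14 \<and> b14)) DP)"

lemma hexp_in: "\<forall>b3 b5 b7 b9. hexp b3 b5 b7 b9 \<in> insert DP HS"
  unfolding hexp_def DP_def HS_def by code_simp


lemma sfilter_cong: "(\<And>x. x \<in> A \<Longrightarrow> P x = Q x) \<Longrightarrow> Set.filter P A = Set.filter Q A" by auto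
lemma HS_sub: "hyperplanes DP DT \<subseteq> HS"
proof
  fix H assume "H \<in> hyperplanes DP DT"
  then have g: "geom_hyperplane DP DT H" by (simp add: hyperplanes_def)
  then have sub: "H \<subset> DP" and lc: "\<And>l. l \<in> DT \<Longrightarrow> l \<subseteq> H \<or> card (l \<inter> H) = 1"
    by (auto simp: geom_hyperplane_def)
  have m: "{3,5,6} \<in> DT" "{3,9,10} \<in> DT" "{5,9,12} \<in> DT" "{7,9,14} \<in> DT" "{7,10,13} \<in> DT" "{7,11,12} \<in> DT"
    by (simp only: DT_def insert_iff simp_thms)+
  have r1: "(6 \<in> H) = ((3 \<in> H) = (5 \<in> H))" by (rule line_rule) (use lc[OF m(1)] in auto)
  have r2: "(10 \<in> H) = ((3 \<in> H) = (9 \<in> H))" by (rule line_rule) (use lc[OF m(2)] in auto)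
  have r3: "(12 \<in> H) = ((5 \<in> H) = (9 \<in> H))" by (rule line_rule) (use lc[OF m(3)] in auto)
  have r4: "(14 \<in> H) = ((7 \<in> H) = (9 \<in> H))" by (rule line_rule) (use lc[OF m(4)] in auto)
  have r5: "(13 \<in> H) = ((7 \<in> H) = (10 \<in> H))" by (rule line_rule) (use lc[OF m(5)] in auto)
  have r6: "(11 \<in> H) = ((7 \<in> H) = (12 \<in> H))" by (rule line_rule) (use lc[OF m(6)] in \<open>auto simp: insert_commute\<close>)
  have "H = hexp (3 \<in> H) (5 \<in> H) (7 \<in> H) (9 \<in> H)"
  proof -
    have "H = Set.filter (\<lambda>x. x \<in> H) DP" using sub by auto
    have eq: "\<And>x. x \<in> DP \<Longrightarrow> (x \<in> H) = ((x = 3 \<and> (3 \<in> H)) \<or> (x = 5 \<and> (5 \<in> H)) \<or> (x = 6 \<and> ((3 \<in> H) = (5 \<in> H))) \<or> (x = 7 \<and> (7 \<in> H)) \<or> (x = 9 \<and> (9 \<in> H)) \<or> (x = 10 \<and> ((3 \<in> H) = (9 \<in> H))) \<or> (x = 11 \<and> ((7 \<in> H) = ((5 \<in> H) = (9 \<in> H)))) \<or> (x = 12 \<and> ((5 \<in> H) = (9 \<in> H))) \<or> (x = 13 \<and> ((7 \<in> H) = ((3 \<in> H) = (9 \<in> H)))) \<or> (x = 14 \<and> ((7 \<in> H) = (9 \<in> H))))"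
      unfolding DP_def by (elim insertE emptyE; simp add: r1 r2 r3 r4 r5 r6)
    have "Set.filter (\<lambda>x. x \<in> H) DP = Set.filter (\<lambda>x. (x = 3 \<and> (3 \<in> H)) \<or> (x = 5 \<and> (5 \<in> H)) \<or> (x = 6 \<and> ((3 \<in> H) = (5 \<in> H))) \<or> (x = 7 \<and> (7 \<in> H)) \<or> (x = 9 \<and> (9 \<in> H)) \<or> (x = 10 \<and> ((3 \<in> H) = (9 \<in> H))) \<or> (x = 11 \<and> ((7 \<in> H) = ((5 \<in> H) = (9 \<in> H)))) \<or> (x = 12 \<and> ((5 \<in> H) = (9 \<in> H))) \<or> (x = 13 \<and> ((7 \<in> H) = ((3 \<in> H) = (9 \<in> H)))) \<or> (x = 14 \<and> ((7 \<in> H) = (9 \<in> H)))) DP"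
      by (rule sfilter_cong, rule eq)
    also have "\<dots> = hexp (3 \<in> H) (5 \<in> H) (7 \<in> H) (9 \<in> H)"
      unfolding hexp_def Let_def by (rule refl)
    finally have "Set.filter (\<lambda>x. x \<in> H) DP = hexp (3 \<in> H) (5 \<in> H) (7 \<in> H) (9 \<in> H)" .
    then show ?thesis using \<open>H = Set.filter (\<lambda>x. x \<in> H) DP\<close> by (rule trans[rotated])
  qed
  then have "H \<in> insert DP HS" using hexp_in by metis
  then show "H \<in> HS" using sub by auto
qed



lemma trip_set: "{t. \<exists>a b c. t = {a, b, c} \<and> 1 \<le> a \<and> a < b \<and> b < c \<and> c \<le> 2^4 - 1 \<and>
      (cd_mult 4 (cd_basis a) (cd_basis b) = cd_basis c \<or>
       cd_mult 4 (cd_basis a) (cd_basis b) = (\<lambda>i. - cd_basis c i)) \<and> R a b c}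
  = (\<lambda>(a,b). {a,b,ix 4 a b}) ` Set.filter (\<lambda>(a,b). a<b \<and> b< ix 4 a b \<and> ix 4 a b \<le> 15 \<and> R a b (ix 4 a b)) ({1..15}\<times>{1..15})"
  (is "?L = ?R")
proof
  show "?L \<subseteq> ?R"
  proof
    fix t assume "t \<in> ?L"
    then obtain a b c where h: "t = {a,b,c}" "1 \<le> a" "a < b" "b < c" "c \<le> 15" "R a b c"
      "cd_mult 4 (cd_basis a) (cd_basis b) = cd_basis c \<or>
       cd_mult 4 (cd_basis a) (cd_basis b) = (\<lambda>i. - cd_basis c i)"
      by auto
    then have "ix 4 a b = c" using cond4[of a b c] by simp
    then show "t \<in> ?R" using h by (auto intro!: image_eqI[where x="(a,b)"])
  qed
next
  show "?R \<subseteq> ?L"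
  proof
    fix t assume "t \<in> ?R"
    then obtain a b where h: "t = {a,b,ix 4 a b}" "1 \<le> a" "a < b" "b < ix 4 a b" "ix 4 a b \<le> 15" "R a b (ix 4 a b)"
      by auto
    then show "t \<in> ?L" using cond4[of a b "ix 4 a b"]
      by (intro CollectI exI[of _ a] exI[of _ b] exI[of _ "ix 4 a b"]) auto
  qed
qed

lemma OT_eq: "{t. ordinary_triple 4 t} = OT"
  unfolding ordinary_triple_def trip_set OT_def by code_simp

lemma TT_eq: "{t. dist_triple 4 t} = DT \<union> OT"
proof -
  have "{t. dist_triple 4 t} = {t. \<exists>a b c. t = {a, b, c} \<and> 1 \<le> a \<and> a < b \<and> b < c \<and> c \<le> 2^4 - 1 \<and>
      (cd_mult 4 (cd_basis a) (cd_basis b) = cd_basis c \<or>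
       cd_mult 4 (cd_basis a) (cd_basis b) = (\<lambda>i. - cd_basis c i)) \<and> True}"
    unfolding dist_triple_def by simp
  also have "\<dots> = DT \<union> OT" unfolding trip_set DT_def OT_def by code_simp
  finally show ?thesis .
qed

lemma ex_def: "(\<exists>t. defective_triple 4 t \<and> a \<in> t) = (\<exists>t\<in>DT. a \<in> t)"
  using DT_eq by auto

lemma DP_eq: "D_points = DP"
  unfolding D_points_def ex_def DP_def DT_def by code_simp

lemma part1: "{a \<in> {1..15}. \<not> (\<exists>t. defective_triple 4 t \<and> a \<in> t)} = {1, 2, 4, 8, 15}"
  unfolding ex_def DT_def by code_simp

lemma part2: "\<forall>a \<in> {3, 5, 6, 7, 9, 10, 11, 12, 13, 14}.
          card {t. defective_triple 4 t \<and> a \<in> t} = 3 \<and>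
          card {t. ordinary_triple 4 t \<and> a \<in> t} = 4"
proof -
  have e: "\<And>P a. {t. P t \<and> a \<in> t} = Set.filter (\<lambda>t. a \<in> t) {t. P t}" by auto
  show ?thesis unfolding e DT_eq OT_eq DT_def OT_def by code_simp
qed

lemma G2p: "G2_points n = Set.filter (\<lambda>s. card s = 2) (Pow {1..n})"
  by (auto simp: G2_points_def)
lemma G2l: "G2_lines n = Set.filter (\<lambda>s. card s = 3) (Pow {1..n})"
  by (auto simp: G2_lines_def)

lemma inc_iso_I: "bij_betw f P Q \<Longrightarrow> bij_betw g L M \<Longrightarrow> (\<forall>p\<in>P. \<forall>l\<in>L. I p l \<longleftrightarrow> J (f p) (g l))
  \<Longrightarrow> inc_iso P L I Q M J"
  unfolding inc_iso_def by blast

lemma part3: "inc_iso D_points sed_def_triples (\<in>) (G2_points 5) (G2_lines 5) (\<subseteq>)"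
proof (rule inc_iso_I[where f = fD and g = "\<lambda>l. \<Union>(fD ` l)"])
  show "bij_betw fD D_points (G2_points 5)"
    unfolding DP_eq G2p bij_betw_def inj_on_def DP_def fD_def by code_simp
  show "bij_betw (\<lambda>l. \<Union>(fD ` l)) sed_def_triples (G2_lines 5)"
    unfolding sed_def_triples_def DT_eq G2l bij_betw_def inj_on_def DT_def fD_def by code_simp
  show "\<forall>p\<in>D_points. \<forall>l\<in>sed_def_triples. p \<in> l \<longleftrightarrow> fD p \<subseteq> \<Union>(fD ` l)"
    unfolding DP_eq sed_def_triples_def DT_eq DT_def DP_def fD_def by code_simp
qed

definition phi :: "nat set \<Rightarrow> nat" where "phi H = (let b3 = 3 \<in> H; b5 = 5 \<in> H; b7 = 7 \<in> H; b9 = 9 \<in> H in (if b3 then (if b5 then (if b7 then (if b9 then 0 else 7) else (if b9 then 15 else 8)) else (if b7 then (if b9 then 4 else 3) else (if b9 then 11 else 12))) else (if b5 then (if b7 then (if b9 then 2 else 5) else (if b9 then 13 else 10)) else (if b7 then (if b9 then 6 else 1) else (if b9 then 9 else 14)))))"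

lemma HS_eq: "hyperplanes DP DT = HS" using HS_sub HS_sup by blast

lemma vline_eq: "veldkamp_line P L H1 H2 = Set.filter (\<lambda>H. H = H1 \<or> H = H2 \<or> (H1 \<inter> H2 = H1 \<inter> H \<and> H1 \<inter> H = H2 \<inter> H)) (hyperplanes P L)"
  by (auto simp: veldkamp_line_def hyperplanes_def)

lemma vl_eq: "veldkamp_lines P L = (\<lambda>(H1,H2). veldkamp_line P L H1 H2) ` Set.filter (\<lambda>(a,b). a \<noteq> b) (hyperplanes P L \<times> hyperplanes P L)"
  by (auto simp: veldkamp_lines_def hyperplanes_def)

lemma part4a: "bij_betw phi HS {1..15}"
  unfolding bij_betw_def inj_on_def by code_simp



lemma ball_ins: "(\<forall>x\<in>insert a A. P x) = (P a \<and> (\<forall>x\<in>A. P x))" by auto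
lemma ball_emp: "(\<forall>x\<in>{}. P x) = True" by auto
lemma bex_ins: "(\<exists>x\<in>insert a A. P x) = (P a \<or> (\<exists>x\<in>A. P x))" by auto
lemma bex_emp: "(\<exists>x\<in>{}. P x) = False" by auto
lemma filt_ins: "Set.filter P (insert a A) = (if P a then {a} else {}) \<union> Set.filter P A" by auto
lemma filt_emp: "Set.filter P {} = {}" by auto
lemma coll_ins: "{x \<in> insert a A. P x} = (if P a then {a} else {}) \<union> {x \<in> A. P x}" by auto
lemma coll_emp: "{x \<in> {}. P x} = {}" by auto
lemmas expand = ball_ins ball_emp bex_ins bex_emp filt_ins filt_emp coll_ins coll_emp

definition vcond :: "nat set \<Rightarrow> nat set \<Rightarrow> nat set \<Rightarrow> bool" where
 "vcond A B H = ((\<forall>x\<in>DP. x\<in>H \<longleftrightarrow> x\<in>A) \<or> (\<forall>x\<in>DP. x\<in>H \<longleftrightarrow> x\<in>B) \<or>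
    (\<forall>x\<in>DP. (x\<in>A \<and> x\<in>B \<longleftrightarrow> x\<in>A \<and> x\<in>H) \<and> (x\<in>A \<and> x\<in>H \<longleftrightarrow> x\<in>B \<and> x\<in>H)))"
definition vfil :: "nat set \<Rightarrow> nat set \<Rightarrow> nat set set" where "vfil A B = Set.filter (vcond A B) HS"

lemma HS_P: "H \<in> HS \<Longrightarrow> H \<subseteq> DP"
  using HS_eq by (auto simp: hyperplanes_def geom_hyperplane_def)

lemma vline_vfil: "A \<in> HS \<Longrightarrow> B \<in> HS \<Longrightarrow> veldkamp_line DP DT A B = vfil A B"
  unfolding veldkamp_line_def vfil_def vcond_def HS_eq[symmetric]
  by (auto simp: hyperplanes_def geom_hyperplane_def)

definition IMG where "IMG = (\<lambda>V. phi ` V) ` veldkamp_lines DP DT"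

lemma img_mem: "A \<in> HS \<Longrightarrow> B \<in> HS \<Longrightarrow> A \<noteq> B \<Longrightarrow> phi ` vfil A B \<in> IMG"
proof -
  assume a: "A \<in> HS" and b: "B \<in> HS" and n: "A \<noteq> B"
  have g: "geom_hyperplane DP DT A" "geom_hyperplane DP DT B"
    using a b unfolding HS_eq[symmetric] hyperplanes_def by auto
  have "veldkamp_line DP DT A B \<in> veldkamp_lines DP DT"
    unfolding veldkamp_lines_def using g n by blast
  then have "phi ` veldkamp_line DP DT A B \<in> IMG" unfolding IMG_def by (rule imageI)
  then show ?thesis using vline_vfil[OF a b] by simp
qed

lemma memT: "3 \<in> ({3, 5, 6, 7}::nat set)" "5 \<in> ({3, 5, 6, 7}::nat set)" "6 \<in> ({3, 5, 6, 7}::nat set)" "7 \<in> ({3, 5, 6, 7}::nat set)" "3 \<in> ({3, 7, 11, 12}::nat set)" "7 \<in> ({3, 7, 11, 12}::nat set)" "11 \<in> ({3, 7, 11, 12}::nat set)" "12 \<in> ({3, 7, 11, 12}::nat set)" "3 \<in> ({3, 9, 10, 11}::nat set)" "9 \<in> ({3, 9, 10, 11}::nat set)" "10 \<in> ({3, 9, 10, 11}::nat set)" "11 \<in> ({3, 9, 10, 11}::nat set)" "3 \<in> ({3, 12, 13, 14}::nat set)" "12 \<in> ({3, 12, 13, 14}::nat set)" "13 \<in> ({3, 12, 13, 14}::nat set)" "14 \<in> ({3, 12, 13, 14}::nat set)" "5 \<in> ({5, 7, 10, 13}::nat set)" "7 \<in> ({5, 7, 10, 13}::nat set)" "10 \<in>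 ({5, 7, 10, 13}::nat set)" "13 \<in> ({5, 7, 10, 13}::nat set)" "5 \<in> ({5, 9, 12, 13}::nat set)" "9 \<in> ({5, 9, 12, 13}::nat set)" "12 \<in> ({5, 9, 12, 13}::nat set)" "13 \<in> ({5, 9, 12, 13}::nat set)" "5 \<in> ({5, 10, 11, 14}::nat set)" "10 \<in> ({5, 10, 11, 14}::nat set)" "11 \<in> ({5, 10, 11, 14}::nat set)" "14 \<in> ({5, 10, 11, 14}::nat set)" "6 \<in> ({6, 7, 9, 14}::nat set)" "7 \<in> ({6, 7, 9, 14}::nat set)" "9 \<in> ({6, 7, 9, 14}::nat set)" "14 \<in> ({6, 7, 9, 14}::nat set)" "6 \<in> ({6, 9, 11, 13}::nat set)" "9 \<in> ({6, 9, 11, 13}::nat set)" "11 \<in> ({6, 9, 11, 13}::nat set)" "13 \<in> ({6, 9, 11, 13}::nat set)" "6 \<in> ({6, 10, 12, 14}::nat set)" "10 \<in> ({6, 10, 12, 14}::nat set)" "12 \<in> ({6, 10, 12, 14}::nat set)" "14 \<in> ({6, 10, 12, 14}::nat set)" "3 \<in> ({3, 5, 6, 9, 10, 12}::nat set)" "5 \<in> ({3, 5, 6, 9, 10, 12}::nat set)" "6 \<in> ({3, 5, 6, 9, 10, 12}::nat set)" "9 \<in> ({3, 5, 6, 9, 10, 12}::nat set)" "10 \<in> ({3, 5, 6, 9, 10, 12}::nat set)" "12 \<in> ({3, 5, 6, 9, 10, 12}::nat set)" "3 \<in> ({3, 5, 6, 11, 13, 14}::nat set)" "5 \<in> ({3,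 5, 6, 11, 13, 14}::nat set)" "6 \<in> ({3, 5, 6, 11, 13, 14}::nat set)" "11 \<in> ({3, 5, 6, 11, 13, 14}::nat set)" "13 \<in> ({3, 5, 6, 11, 13, 14}::nat set)" "14 \<in> ({3, 5, 6, 11, 13, 14}::nat set)" "3 \<in> ({3, 7, 9, 10, 13, 14}::nat set)" "7 \<in> ({3, 7, 9, 10, 13, 14}::nat set)" "9 \<in> ({3, 7, 9, 10, 13, 14}::nat set)" "10 \<in> ({3, 7, 9, 10, 13, 14}::nat set)" "13 \<in> ({3, 7, 9, 10, 13, 14}::nat set)" "14 \<in> ({3, 7, 9, 10, 13, 14}::nat set)" "5 \<in> ({5, 7, 9, 11, 12, 14}::nat set)" "7 \<in> ({5, 7, 9, 11, 12, 14}::nat set)" "9 \<in> ({5, 7, 9, 11, 12, 14}::nat set)" "11 \<in> ({5, 7, 9, 11, 12, 14}::nat set)" "12 \<in> ({5, 7, 9, 11, 12, 14}::nat set)" "14 \<in> ({5, 7, 9, 11, 12, 14}::nat set)" "6 \<in> ({6, 7, 10, 11, 12, 13}::nat set)" "7 \<in> ({6, 7, 10, 11, 12, 13}::nat set)" "10 \<in> ({6, 7, 10, 11, 12, 13}::nat set)" "11 \<in> ({6, 7, 10, 11, 12, 13}::nat set)" "12 \<in> ({6, 7, 10, 11, 12, 13}::nat set)" "13 \<in> ({6, 7, 10, 11, 12, 13}::nat set)"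
  by simp_all
lemma memF: "9 \<notin> ({3, 5, 6, 7}::nat set)" "10 \<notin> ({3, 5, 6, 7}::nat set)" "11 \<notin> ({3, 5, 6, 7}::nat set)" "12 \<notin> ({3, 5, 6, 7}::nat set)" "13 \<notin> ({3, 5, 6, 7}::nat set)" "14 \<notin> ({3, 5, 6, 7}::nat set)" "5 \<notin> ({3, 7, 11, 12}::nat set)" "6 \<notin> ({3, 7, 11, 12}::nat set)" "9 \<notin> ({3, 7, 11, 12}::nat set)" "10 \<notin> ({3, 7, 11, 12}::nat set)" "13 \<notin> ({3, 7, 11, 12}::nat set)" "14 \<notin> ({3, 7, 11, 12}::nat set)" "5 \<notin> ({3, 9, 10, 11}::nat set)" "6 \<notin> ({3, 9, 10, 11}::nat set)" "7 \<notin> ({3, 9, 10, 11}::nat set)" "12 \<notin> ({3, 9, 10, 11}::nat set)" "13 \<notin> ({3, 9, 10, 11}::nat set)" "14 \<notin> ({3, 9, 10, 11}::nat set)" "5 \<notin> ({3, 12, 13, 14}::nat set)" "6 \<notin> ({3, 12, 13, 14}::nat set)" "7 \<notin> ({3, 12, 13, 14}::nat set)" "9 \<notin> ({3, 12, 13, 14}::nat set)" "10 \<notin> ({3, 12, 13, 14}::nat set)" "11 \<notin> ({3, 12, 13, 14}::nat set)" "3 \<notin> ({5, 7, 10, 13}::nat set)" "6 \<notin> ({5, 7, 10, 13}::nat set)" "9 \<notin> ({5, 7, 10, 13}::nat set)" "11 \<notin> ({5, 7, 10, 13}::nat set)" "12 \<notin> ({5, 7, 10, 13}::nat set)" "14 \<notin>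 ({5, 7, 10, 13}::nat set)" "3 \<notin> ({5, 9, 12, 13}::nat set)" "6 \<notin> ({5, 9, 12, 13}::nat set)" "7 \<notin> ({5, 9, 12, 13}::nat set)" "10 \<notin> ({5, 9, 12, 13}::nat set)" "11 \<notin> ({5, 9, 12, 13}::nat set)" "14 \<notin> ({5, 9, 12, 13}::nat set)" "3 \<notin> ({5, 10, 11, 14}::nat set)" "6 \<notin> ({5, 10, 11, 14}::nat set)" "7 \<notin> ({5, 10, 11, 14}::nat set)" "9 \<notin> ({5, 10, 11, 14}::nat set)" "12 \<notin> ({5, 10, 11, 14}::nat set)" "13 \<notin> ({5, 10, 11, 14}::nat set)" "3 \<notin> ({6, 7, 9, 14}::nat set)" "5 \<notin> ({6, 7, 9, 14}::nat set)" "10 \<notin> ({6, 7, 9, 14}::nat set)" "11 \<notin> ({6, 7, 9, 14}::nat set)" "12 \<notin> ({6, 7, 9, 14}::nat set)" "13 \<notin> ({6, 7, 9, 14}::nat set)" "3 \<notin> ({6, 9, 11, 13}::nat set)" "5 \<notin> ({6, 9, 11, 13}::nat set)" "7 \<notin> ({6, 9, 11, 13}::nat set)" "10 \<notin> ({6, 9, 11, 13}::nat set)" "12 \<notin> ({6, 9, 11, 13}::nat set)" "14 \<notin> ({6, 9, 11, 13}::nat set)" "3 \<notin> ({6, 10, 12, 14}::nat set)" "5 \<notin> ({6, 10, 12, 14}::nat set)" "7 \<notin> ({6, 10, 12, 14}::nat set)" "9 \<notin> ({6, 10, 12, 14}::nat set)" "11 \<notin> ({6, 10, 12, 14}::nat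 set)" "13 \<notin> ({6, 10, 12, 14}::nat set)" "7 \<notin> ({3, 5, 6, 9, 10, 12}::nat set)" "11 \<notin> ({3, 5, 6, 9, 10, 12}::nat set)" "13 \<notin> ({3, 5, 6, 9, 10, 12}::nat set)" "14 \<notin> ({3, 5, 6, 9, 10, 12}::nat set)" "7 \<notin> ({3, 5, 6, 11, 13, 14}::nat set)" "9 \<notin> ({3, 5, 6, 11, 13, 14}::nat set)" "10 \<notin> ({3, 5, 6, 11, 13, 14}::nat set)" "12 \<notin> ({3, 5, 6, 11, 13, 14}::nat set)" "5 \<notin> ({3, 7, 9, 10, 13, 14}::nat set)" "6 \<notin> ({3, 7, 9, 10, 13, 14}::nat set)" "11 \<notin> ({3, 7, 9, 10, 13, 14}::nat set)" "12 \<notin> ({3, 7, 9, 10, 13, 14}::nat set)" "3 \<notin> ({5, 7, 9, 11, 12, 14}::nat set)" "6 \<notin> ({5, 7, 9, 11, 12, 14}::nat set)" "10 \<notin> ({5, 7, 9, 11, 12, 14}::nat set)" "13 \<notin> ({5, 7, 9, 11, 12, 14}::nat set)" "3 \<notin> ({6, 7, 10, 11, 12, 13}::nat set)" "5 \<notin> ({6, 7, 10, 11, 12, 13}::nat set)" "9 \<notin> ({6, 7, 10, 11, 12, 13}::nat set)" "14 \<notin> ({6, 7, 10, 11, 12, 13}::nat set)"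
  by simp_all
lemma phiT: "phi {3, 5, 6, 7} = 7" "phi {3, 7, 11, 12} = 3" "phi {3, 9, 10, 11} = 11" "phi {3, 12, 13, 14} = 12" "phi {5, 7, 10, 13} = 5" "phi {5, 9, 12, 13} = 13" "phi {5, 10, 11, 14} = 10" "phi {6, 7, 9, 14} = 6" "phi {6, 9, 11, 13} = 9" "phi {6, 10, 12, 14} = 14" "phi {3, 5, 6, 9, 10, 12} = 15" "phi {3, 5, 6, 11, 13, 14} = 8" "phi {3, 7, 9, 10, 13, 14} = 4" "phi {5, 7, 9, 11, 12, 14} = 2" "phi {6, 7, 10, 11, 12, 13} = 1"
  unfolding phi_def by simp_all


lemmas evs = expand memT memF phiT simp_thms if_True if_False Un_empty_left Un_empty_right image_insert image_empty image_Un Un_insert_left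

lemma w0: "{1, 2, 3} \<in> IMG"
proof -
  have "{1, 2, 3} = phi ` vfil {3, 7, 11, 12} {5, 7, 9, 11, 12, 14}" by (unfold vfil_def vcond_def HS_def DP_def; simp only: evs; auto)
  moreover have "({3, 7, 11, 12}::nat set) \<noteq> {5, 7, 9, 11, 12, 14}" by (rule notI, drule arg_cong[where f="\<lambda>S. (3::nat) \<in> S"], simp)
  moreover have "{3, 7, 11, 12} \<in> HS" "{5, 7, 9, 11, 12, 14} \<in> HS" by (simp only: HS_def insert_iff simp_thms)+
  ultimately show ?thesis using img_mem by simp
qed
lemma w1: "{1, 4, 5} \<in> IMG"
proof -
  have "{1, 4, 5} = phi ` vfil {5, 7, 10, 13} {3, 7, 9, 10, 13, 14}" by (unfold vfil_def vcond_def HS_def DP_def; simp only: evs; auto)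
  moreover have "({5, 7, 10, 13}::nat set) \<noteq> {3, 7, 9, 10, 13, 14}" by (rule notI, drule arg_cong[where f="\<lambda>S. (5::nat) \<in> S"], simp)
  moreover have "{5, 7, 10, 13} \<in> HS" "{3, 7, 9, 10, 13, 14} \<in> HS" by (simp only: HS_def insert_iff simp_thms)+
  ultimately show ?thesis using img_mem by simp
qed
lemma w2: "{1, 6, 7} \<in> IMG"
proof -
  have "{1, 6, 7} = phi ` vfil {3, 5, 6, 7} {6, 7, 9, 14}" by (unfold vfil_def vcond_def HS_def DP_def; simp only: evs; auto)
  moreover have "({3, 5, 6, 7}::nat set) \<noteq> {6, 7, 9, 14}" by (rule notI, drule arg_cong[where f="\<lambda>S. (3::nat) \<in> S"], simp)
  moreover have "{3, 5, 6, 7} \<in> HS" "{6, 7, 9, 14} \<in> HS" by (simp only: HS_def insert_iff simp_thms)+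
  ultimately show ?thesis using img_mem by simp
qed
lemma w3: "{1, 8, 9} \<in> IMG"
proof -
  have "{1, 8, 9} = phi ` vfil {6, 9, 11, 13} {3, 5, 6, 11, 13, 14}" by (unfold vfil_def vcond_def HS_def DP_def; simp only: evs; auto)
  moreover have "({6, 9, 11, 13}::nat set) \<noteq> {3, 5, 6, 11, 13, 14}" by (rule notI, drule arg_cong[where f="\<lambda>S. (9::nat) \<in> S"], simp)
  moreover have "{6, 9, 11, 13} \<in> HS" "{3, 5, 6, 11, 13, 14} \<in> HS" by (simp only: HS_def insert_iff simp_thms)+
  ultimately show ?thesis using img_mem by simp
qed
lemma w4: "{1, 10, 11} \<in> IMG"
proof -
  have "{1, 10, 11} = phi ` vfil {3, 9, 10, 11} {5, 10, 11, 14}" by (unfold vfil_def vcond_def HS_def DP_def; simp only: evs; auto)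
  moreover have "({3, 9, 10, 11}::nat set) \<noteq> {5, 10, 11, 14}" by (rule notI, drule arg_cong[where f="\<lambda>S. (9::nat) \<in> S"], simp)
  moreover have "{3, 9, 10, 11} \<in> HS" "{5, 10, 11, 14} \<in> HS" by (simp only: HS_def insert_iff simp_thms)+
  ultimately show ?thesis using img_mem by simp
qed
lemma w5: "{1, 12, 13} \<in> IMG"
proof -
  have "{1, 12, 13} = phi ` vfil {3, 12, 13, 14} {5, 9, 12, 13}" by (unfold vfil_def vcond_def HS_def DP_def; simp only: evs; auto)
  moreover have "({3, 12, 13, 14}::nat set) \<noteq> {5, 9, 12, 13}" by (rule notI, drule arg_cong[where f="\<lambda>S. (3::nat) \<in> S"], simp)
  moreover have "{3, 12, 13, 14} \<in> HS" "{5, 9, 12, 13} \<in> HS" by (simp only: HS_def insert_iff simp_thms)+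
  ultimately show ?thesis using img_mem by simp
qed
lemma w6: "{1, 14, 15} \<in> IMG"
proof -
  have "{1, 14, 15} = phi ` vfil {6, 10, 12, 14} {3, 5, 6, 9, 10, 12}" by (unfold vfil_def vcond_def HS_def DP_def; simp only: evs; auto)
  moreover have "({6, 10, 12, 14}::nat set) \<noteq> {3, 5, 6, 9, 10, 12}" by (rule notI, drule arg_cong[where f="\<lambda>S. (14::nat) \<in> S"], simp)
  moreover have "{6, 10, 12, 14} \<in> HS" "{3, 5, 6, 9, 10, 12} \<in> HS" by (simp only: HS_def insert_iff simp_thms)+
  ultimately show ?thesis using img_mem by simp
qed
lemma w7: "{2, 4, 6} \<in> IMG"
proof -
  have "{2, 4, 6} = phi ` vfil {6, 7, 9, 14} {3, 7, 9, 10, 13, 14}" by (unfold vfil_def vcond_def HS_def DP_def; simp only: evs; auto)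
  moreover have "({6, 7, 9, 14}::nat set) \<noteq> {3, 7, 9, 10, 13, 14}" by (rule notI, drule arg_cong[where f="\<lambda>S. (6::nat) \<in> S"], simp)
  moreover have "{6, 7, 9, 14} \<in> HS" "{3, 7, 9, 10, 13, 14} \<in> HS" by (simp only: HS_def insert_iff simp_thms)+
  ultimately show ?thesis using img_mem by simp
qed
lemma w8: "{2, 5, 7} \<in> IMG"
proof -
  have "{2, 5, 7} = phi ` vfil {3, 5, 6, 7} {5, 7, 10, 13}" by (unfold vfil_def vcond_def HS_def DP_def; simp only: evs; auto)
  moreover have "({3, 5, 6, 7}::nat set) \<noteq> {5, 7, 10, 13}" by (rule notI, drule arg_cong[where f="\<lambda>S. (3::nat) \<in> S"], simp)
  moreover have "{3, 5, 6, 7} \<in> HS" "{5, 7, 10, 13} \<in> HS" by (simp only: HS_def insert_iff simp_thms)+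
  ultimately show ?thesis using img_mem by simp
qed
lemma w9: "{2, 8, 10} \<in> IMG"
proof -
  have "{2, 8, 10} = phi ` vfil {5, 10, 11, 14} {3, 5, 6, 11, 13, 14}" by (unfold vfil_def vcond_def HS_def DP_def; simp only: evs; auto)
  moreover have "({5, 10, 11, 14}::nat set) \<noteq> {3, 5, 6, 11, 13, 14}" by (rule notI, drule arg_cong[where f="\<lambda>S. (10::nat) \<in> S"], simp)
  moreover have "{5, 10, 11, 14} \<in> HS" "{3, 5, 6, 11, 13, 14} \<in> HS" by (simp only: HS_def insert_iff simp_thms)+
  ultimately show ?thesis using img_mem by simp
qed
lemma w10: "{2, 9, 11} \<in> IMG"
proof -
  have "{2, 9, 11} = phi ` vfil {3, 9, 10, 11} {6, 9, 11, 13}" by (unfold vfil_def vcond_def HS_def DP_def; simp only: evs; auto)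
  moreover have "({3, 9, 10, 11}::nat set) \<noteq> {6, 9, 11, 13}" by (rule notI, drule arg_cong[where f="\<lambda>S. (10::nat) \<in> S"], simp)
  moreover have "{3, 9, 10, 11} \<in> HS" "{6, 9, 11, 13} \<in> HS" by (simp only: HS_def insert_iff simp_thms)+
  ultimately show ?thesis using img_mem by simp
qed
lemma w11: "{2, 12, 14} \<in> IMG"
proof -
  have "{2, 12, 14} = phi ` vfil {3, 12, 13, 14} {6, 10, 12, 14}" by (unfold vfil_def vcond_def HS_def DP_def; simp only: evs; auto)
  moreover have "({3, 12, 13, 14}::nat set) \<noteq> {6, 10, 12, 14}" by (rule notI, drule arg_cong[where f="\<lambda>S. (3::nat) \<in> S"], simp)
  moreover have "{3, 12, 13, 14} \<in> HS" "{6, 10, 12, 14} \<in> HS" by (simp only: HS_def insert_iff simp_thms)+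
  ultimately show ?thesis using img_mem by simp
qed
lemma w12: "{2, 13, 15} \<in> IMG"
proof -
  have "{2, 13, 15} = phi ` vfil {5, 9, 12, 13} {3, 5, 6, 9, 10, 12}" by (unfold vfil_def vcond_def HS_def DP_def; simp only: evs; auto)
  moreover have "({5, 9, 12, 13}::nat set) \<noteq> {3, 5, 6, 9, 10, 12}" by (rule notI, drule arg_cong[where f="\<lambda>S. (13::nat) \<in> S"], simp)
  moreover have "{5, 9, 12, 13} \<in> HS" "{3, 5, 6, 9, 10, 12} \<in> HS" by (simp only: HS_def insert_iff simp_thms)+
  ultimately show ?thesis using img_mem by simp
qed
lemma w13: "{3, 4, 7} \<in> IMG"
proof -
  have "{3, 4, 7} = phi ` vfil {3, 5, 6, 7} {3, 7, 11, 12}" by (unfold vfil_def vcond_def HS_def DP_def; simp only: evs; auto)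
  moreover have "({3, 5, 6, 7}::nat set) \<noteq> {3, 7, 11, 12}" by (rule notI, drule arg_cong[where f="\<lambda>S. (5::nat) \<in> S"], simp)
  moreover have "{3, 5, 6, 7} \<in> HS" "{3, 7, 11, 12} \<in> HS" by (simp only: HS_def insert_iff simp_thms)+
  ultimately show ?thesis using img_mem by simp
qed
lemma w14: "{3, 5, 6} \<in> IMG"
proof -
  have "{3, 5, 6} = phi ` vfil {3, 7, 11, 12} {5, 7, 10, 13}" by (unfold vfil_def vcond_def HS_def DP_def; simp only: evs; auto)
  moreover have "({3, 7, 11, 12}::nat set) \<noteq> {5, 7, 10, 13}" by (rule notI, drule arg_cong[where f="\<lambda>S. (3::nat) \<in> S"], simp)
  moreover have "{3, 7, 11, 12} \<in> HS" "{5, 7, 10, 13} \<in> HS" by (simp only: HS_def insert_iff simp_thms)+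
  ultimately show ?thesis using img_mem by simp
qed
lemma w15: "{3, 8, 11} \<in> IMG"
proof -
  have "{3, 8, 11} = phi ` vfil {3, 7, 11, 12} {3, 9, 10, 11}" by (unfold vfil_def vcond_def HS_def DP_def; simp only: evs; auto)
  moreover have "({3, 7, 11, 12}::nat set) \<noteq> {3, 9, 10, 11}" by (rule notI, drule arg_cong[where f="\<lambda>S. (12::nat) \<in> S"], simp)
  moreover have "{3, 7, 11, 12} \<in> HS" "{3, 9, 10, 11} \<in> HS" by (simp only: HS_def insert_iff simp_thms)+
  ultimately show ?thesis using img_mem by simp
qed
lemma w16: "{3, 9, 10} \<in> IMG"
proof -
  have "{3, 9, 10} = phi ` vfil {3, 7, 11, 12} {5, 10, 11, 14}" by (unfold vfil_def vcond_def HS_def DP_def; simp only: evs; auto)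
  moreover have "({3, 7, 11, 12}::nat set) \<noteq> {5, 10, 11, 14}" by (rule notI, drule arg_cong[where f="\<lambda>S. (3::nat) \<in> S"], simp)
  moreover have "{3, 7, 11, 12} \<in> HS" "{5, 10, 11, 14} \<in> HS" by (simp only: HS_def insert_iff simp_thms)+
  ultimately show ?thesis using img_mem by simp
qed
lemma w17: "{3, 12, 15} \<in> IMG"
proof -
  have "{3, 12, 15} = phi ` vfil {3, 7, 11, 12} {3, 12, 13, 14}" by (unfold vfil_def vcond_def HS_def DP_def; simp only: evs; auto)
  moreover have "({3, 7, 11, 12}::nat set) \<noteq> {3, 12, 13, 14}" by (rule notI, drule arg_cong[where f="\<lambda>S. (11::nat) \<in> S"], simp)
  moreover have "{3, 7, 11, 12} \<in> HS" "{3, 12, 13, 14} \<in> HS" by (simp only: HS_def insert_iff simp_thms)+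
  ultimately show ?thesis using img_mem by simp
qed
lemma w18: "{3, 13, 14} \<in> IMG"
proof -
  have "{3, 13, 14} = phi ` vfil {3, 7, 11, 12} {5, 9, 12, 13}" by (unfold vfil_def vcond_def HS_def DP_def; simp only: evs; auto)
  moreover have "({3, 7, 11, 12}::nat set) \<noteq> {5, 9, 12, 13}" by (rule notI, drule arg_cong[where f="\<lambda>S. (3::nat) \<in> S"], simp)
  moreover have "{3, 7, 11, 12} \<in> HS" "{5, 9, 12, 13} \<in> HS" by (simp only: HS_def insert_iff simp_thms)+
  ultimately show ?thesis using img_mem by simp
qed
lemma w19: "{4, 8, 12} \<in> IMG"
proof -
  have "{4, 8, 12} = phi ` vfil {3, 12, 13, 14} {3, 5, 6, 11, 13, 14}" by (unfold vfil_def vcond_def HS_def DP_def; simp only: evs; auto)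
  moreover have "({3, 12, 13, 14}::nat set) \<noteq> {3, 5, 6, 11, 13, 14}" by (rule notI, drule arg_cong[where f="\<lambda>S. (12::nat) \<in> S"], simp)
  moreover have "{3, 12, 13, 14} \<in> HS" "{3, 5, 6, 11, 13, 14} \<in> HS" by (simp only: HS_def insert_iff simp_thms)+
  ultimately show ?thesis using img_mem by simp
qed
lemma w20: "{4, 9, 13} \<in> IMG"
proof -
  have "{4, 9, 13} = phi ` vfil {5, 9, 12, 13} {6, 9, 11, 13}" by (unfold vfil_def vcond_def HS_def DP_def; simp only: evs; auto)
  moreover have "({5, 9, 12, 13}::nat set) \<noteq> {6, 9, 11, 13}" by (rule notI, drule arg_cong[where f="\<lambda>S. (12::nat) \<in> S"], simp)
  moreover have "{5, 9, 12, 13} \<in> HS" "{6, 9, 11, 13} \<in> HS" by (simp only: HS_def insert_iff simp_thms)+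
  ultimately show ?thesis using img_mem by simp
qed
lemma w21: "{4, 10, 14} \<in> IMG"
proof -
  have "{4, 10, 14} = phi ` vfil {5, 10, 11, 14} {6, 10, 12, 14}" by (unfold vfil_def vcond_def HS_def DP_def; simp only: evs; auto)
  moreover have "({5, 10, 11, 14}::nat set) \<noteq> {6, 10, 12, 14}" by (rule notI, drule arg_cong[where f="\<lambda>S. (11::nat) \<in> S"], simp)
  moreover have "{5, 10, 11, 14} \<in> HS" "{6, 10, 12, 14} \<in> HS" by (simp only: HS_def insert_iff simp_thms)+
  ultimately show ?thesis using img_mem by simp
qed
lemma w22: "{4, 11, 15} \<in> IMG"
proof -
  have "{4, 11, 15} = phi ` vfil {3, 9, 10, 11} {3, 5, 6, 9, 10, 12}" by (unfold vfil_def vcond_def HS_def DP_def; simp only: evs; auto)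
  moreover have "({3, 9, 10, 11}::nat set) \<noteq> {3, 5, 6, 9, 10, 12}" by (rule notI, drule arg_cong[where f="\<lambda>S. (11::nat) \<in> S"], simp)
  moreover have "{3, 9, 10, 11} \<in> HS" "{3, 5, 6, 9, 10, 12} \<in> HS" by (simp only: HS_def insert_iff simp_thms)+
  ultimately show ?thesis using img_mem by simp
qed
lemma w23: "{5, 8, 13} \<in> IMG"
proof -
  have "{5, 8, 13} = phi ` vfil {5, 7, 10, 13} {5, 9, 12, 13}" by (unfold vfil_def vcond_def HS_def DP_def; simp only: evs; auto)
  moreover have "({5, 7, 10, 13}::nat set) \<noteq> {5, 9, 12, 13}" by (rule notI, drule arg_cong[where f="\<lambda>S. (10::nat) \<in> S"], simp)
  moreover have "{5, 7, 10, 13} \<in> HS" "{5, 9, 12, 13} \<in> HS" by (simp only: HS_def insert_iff simp_thms)+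
  ultimately show ?thesis using img_mem by simp
qed
lemma w24: "{5, 9, 12} \<in> IMG"
proof -
  have "{5, 9, 12} = phi ` vfil {3, 12, 13, 14} {5, 7, 10, 13}" by (unfold vfil_def vcond_def HS_def DP_def; simp only: evs; auto)
  moreover have "({3, 12, 13, 14}::nat set) \<noteq> {5, 7, 10, 13}" by (rule notI, drule arg_cong[where f="\<lambda>S. (3::nat) \<in> S"], simp)
  moreover have "{3, 12, 13, 14} \<in> HS" "{5, 7, 10, 13} \<in> HS" by (simp only: HS_def insert_iff simp_thms)+
  ultimately show ?thesis using img_mem by simp
qed
lemma w25: "{5, 10, 15} \<in> IMG"
proof -
  have "{5, 10, 15} = phi ` vfil {5, 7, 10, 13} {5, 10, 11, 14}" by (unfold vfil_def vcond_def HS_def DP_def; simp only: evs; auto)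
  moreover have "({5, 7, 10, 13}::nat set) \<noteq> {5, 10, 11, 14}" by (rule notI, drule arg_cong[where f="\<lambda>S. (13::nat) \<in> S"], simp)
  moreover have "{5, 7, 10, 13} \<in> HS" "{5, 10, 11, 14} \<in> HS" by (simp only: HS_def insert_iff simp_thms)+
  ultimately show ?thesis using img_mem by simp
qed
lemma w26: "{5, 11, 14} \<in> IMG"
proof -
  have "{5, 11, 14} = phi ` vfil {3, 9, 10, 11} {5, 7, 10, 13}" by (unfold vfil_def vcond_def HS_def DP_def; simp only: evs; auto)
  moreover have "({3, 9, 10, 11}::nat set) \<noteq> {5, 7, 10, 13}" by (rule notI, drule arg_cong[where f="\<lambda>S. (3::nat) \<in> S"], simp)
  moreover have "{3, 9, 10, 11} \<in> HS" "{5, 7, 10, 13} \<in> HS" by (simp only: HS_def insert_iff simp_thms)+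
  ultimately show ?thesis using img_mem by simp
qed
lemma w27: "{6, 8, 14} \<in> IMG"
proof -
  have "{6, 8, 14} = phi ` vfil {6, 7, 9, 14} {6, 10, 12, 14}" by (unfold vfil_def vcond_def HS_def DP_def; simp only: evs; auto)
  moreover have "({6, 7, 9, 14}::nat set) \<noteq> {6, 10, 12, 14}" by (rule notI, drule arg_cong[where f="\<lambda>S. (9::nat) \<in> S"], simp)
  moreover have "{6, 7, 9, 14} \<in> HS" "{6, 10, 12, 14} \<in> HS" by (simp only: HS_def insert_iff simp_thms)+
  ultimately show ?thesis using img_mem by simp
qed
lemma w28: "{6, 9, 15} \<in> IMG"
proof -
  have "{6, 9, 15} = phi ` vfil {6, 7, 9, 14} {6, 9, 11, 13}" by (unfold vfil_def vcond_def HS_def DP_def; simp only: evs; auto)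
  moreover have "({6, 7, 9, 14}::nat set) \<noteq> {6, 9, 11, 13}" by (rule notI, drule arg_cong[where f="\<lambda>S. (14::nat) \<in> S"], simp)
  moreover have "{6, 7, 9, 14} \<in> HS" "{6, 9, 11, 13} \<in> HS" by (simp only: HS_def insert_iff simp_thms)+
  ultimately show ?thesis using img_mem by simp
qed
lemma w29: "{6, 10, 12} \<in> IMG"
proof -
  have "{6, 10, 12} = phi ` vfil {3, 12, 13, 14} {5, 10, 11, 14}" by (unfold vfil_def vcond_def HS_def DP_def; simp only: evs; auto)
  moreover have "({3, 12, 13, 14}::nat set) \<noteq> {5, 10, 11, 14}" by (rule notI, drule arg_cong[where f="\<lambda>S. (3::nat) \<in> S"], simp)
  moreover have "{3, 12, 13, 14} \<in> HS" "{5, 10, 11, 14} \<in> HS" by (simp only: HS_def insert_iff simp_thms)+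
  ultimately show ?thesis using img_mem by simp
qed
lemma w30: "{6, 11, 13} \<in> IMG"
proof -
  have "{6, 11, 13} = phi ` vfil {3, 9, 10, 11} {5, 9, 12, 13}" by (unfold vfil_def vcond_def HS_def DP_def; simp only: evs; auto)
  moreover have "({3, 9, 10, 11}::nat set) \<noteq> {5, 9, 12, 13}" by (rule notI, drule arg_cong[where f="\<lambda>S. (3::nat) \<in> S"], simp)
  moreover have "{3, 9, 10, 11} \<in> HS" "{5, 9, 12, 13} \<in> HS" by (simp only: HS_def insert_iff simp_thms)+
  ultimately show ?thesis using img_mem by simp
qed
lemma w31: "{7, 8, 15} \<in> IMG"
proof -
  have "{7, 8, 15} = phi ` vfil {3, 5, 6, 7} {3, 5, 6, 9, 10, 12}" by (unfold vfil_def vcond_def HS_def DP_def; simp only: evs; auto)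
  moreover have "({3, 5, 6, 7}::nat set) \<noteq> {3, 5, 6, 9, 10, 12}" by (rule notI, drule arg_cong[where f="\<lambda>S. (7::nat) \<in> S"], simp)
  moreover have "{3, 5, 6, 7} \<in> HS" "{3, 5, 6, 9, 10, 12} \<in> HS" by (simp only: HS_def insert_iff simp_thms)+
  ultimately show ?thesis using img_mem by simp
qed
lemma w32: "{7, 9, 14} \<in> IMG"
proof -
  have "{7, 9, 14} = phi ` vfil {3, 5, 6, 7} {6, 9, 11, 13}" by (unfold vfil_def vcond_def HS_def DP_def; simp only: evs; auto)
  moreover have "({3, 5, 6, 7}::nat set) \<noteq> {6, 9, 11, 13}" by (rule notI, drule arg_cong[where f="\<lambda>S. (3::nat) \<in> S"], simp)
  moreover have "{3, 5, 6, 7} \<in> HS" "{6, 9, 11, 13} \<in> HS" by (simp only: HS_def insert_iff simp_thms)+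
  ultimately show ?thesis using img_mem by simp
qed
lemma w33: "{7, 10, 13} \<in> IMG"
proof -
  have "{7, 10, 13} = phi ` vfil {3, 5, 6, 7} {5, 9, 12, 13}" by (unfold vfil_def vcond_def HS_def DP_def; simp only: evs; auto)
  moreover have "({3, 5, 6, 7}::nat set) \<noteq> {5, 9, 12, 13}" by (rule notI, drule arg_cong[where f="\<lambda>S. (3::nat) \<in> S"], simp)
  moreover have "{3, 5, 6, 7} \<in> HS" "{5, 9, 12, 13} \<in> HS" by (simp only: HS_def insert_iff simp_thms)+
  ultimately show ?thesis using img_mem by simp
qed
lemma w34: "{7, 11, 12} \<in> IMG"
proof -
  have "{7, 11, 12} = phi ` vfil {3, 5, 6, 7} {3, 9, 10, 11}" by (unfold vfil_def vcond_def HS_def DP_def; simp only: evs; auto)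
  moreover have "({3, 5, 6, 7}::nat set) \<noteq> {3, 9, 10, 11}" by (rule notI, drule arg_cong[where f="\<lambda>S. (5::nat) \<in> S"], simp)
  moreover have "{3, 5, 6, 7} \<in> HS" "{3, 9, 10, 11} \<in> HS" by (simp only: HS_def insert_iff simp_thms)+
  ultimately show ?thesis using img_mem by simp
qed
lemmas wall = w0 w1 w2 w3 w4 w5 w6 w7 w8 w9 w10 w11 w12 w13 w14 w15 w16 w17 w18 w19 w20 w21 w22 w23 w24 w25 w26 w27 w28 w29 w30 w31 w32 w33 w34

lemma v0: "phi ` vfil {3, 5, 6, 7} {3, 7, 11, 12} = {3, 4, 7}" by (unfold vfil_def vcond_def HS_def DP_def; simp only: evs; auto)
lemma v1: "phi ` vfil {3, 5, 6, 7} {3, 9, 10, 11} = {7, 11, 12}" by (unfold vfil_def vcond_def HS_def DP_def; simp only: evs; auto)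
lemma v2: "phi ` vfil {3, 5, 6, 7} {3, 12, 13, 14} = {7, 11, 12}" by (unfold vfil_def vcond_def HS_def DP_def; simp only: evs; auto)
lemma v3: "phi ` vfil {3, 5, 6, 7} {5, 7, 10, 13} = {2, 5, 7}" by (unfold vfil_def vcond_def HS_def DP_def; simp only: evs; auto)
lemma v4: "phi ` vfil {3, 5, 6, 7} {5, 9, 12, 13} = {7, 10, 13}" by (unfold vfil_def vcond_def HS_def DP_def; simp only: evs; auto)
lemma v5: "phi ` vfil {3, 5, 6, 7} {5, 10, 11, 14} = {7, 10, 13}" by (unfold vfil_def vcond_def HS_def DP_def; simp only: evs; auto)
lemma v6: "phi ` vfil {3, 5, 6, 7} {6, 7, 9, 14} = {1, 6, 7}" by (unfold vfil_def vcond_def HS_def DP_def; simp only: evs; auto)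
lemma v7: "phi ` vfil {3, 5, 6, 7} {6, 9, 11, 13} = {7, 9, 14}" by (unfold vfil_def vcond_def HS_def DP_def; simp only: evs; auto)
lemma v8: "phi ` vfil {3, 5, 6, 7} {6, 10, 12, 14} = {7, 9, 14}" by (unfold vfil_def vcond_def HS_def DP_def; simp only: evs; auto)
lemma v9: "phi ` vfil {3, 5, 6, 7} {3, 5, 6, 9, 10, 12} = {7, 8, 15}" by (unfold vfil_def vcond_def HS_def DP_def; simp only: evs; auto)
lemma v10: "phi ` vfil {3, 5, 6, 7} {3, 5, 6, 11, 13, 14} = {7, 8, 15}" by (unfold vfil_def vcond_def HS_def DP_def; simp only: evs; auto)
lemma v11: "phi ` vfil {3, 5, 6, 7} {3, 7, 9, 10, 13, 14} = {3, 4, 7}" by (unfold vfil_def vcond_def HS_def DP_def; simp only: evs; auto)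
lemma v12: "phi ` vfil {3, 5, 6, 7} {5, 7, 9, 11, 12, 14} = {2, 5, 7}" by (unfold vfil_def vcond_def HS_def DP_def; simp only: evs; auto)
lemma v13: "phi ` vfil {3, 5, 6, 7} {6, 7, 10, 11, 12, 13} = {1, 6, 7}" by (unfold vfil_def vcond_def HS_def DP_def; simp only: evs; auto)
lemma v14: "phi ` vfil {3, 7, 11, 12} {3, 5, 6, 7} = {3, 4, 7}" by (unfold vfil_def vcond_def HS_def DP_def; simp only: evs; auto)
lemma v15: "phi ` vfil {3, 7, 11, 12} {3, 9, 10, 11} = {3, 8, 11}" by (unfold vfil_def vcond_def HS_def DP_def; simp only: evs; auto)
lemma v16: "phi ` vfil {3, 7, 11, 12} {3, 12, 13, 14} = {3, 12, 15}" by (unfold vfil_def vcond_def HS_def DP_def; simp only: evs; auto)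
lemma v17: "phi ` vfil {3, 7, 11, 12} {5, 7, 10, 13} = {3, 5, 6}" by (unfold vfil_def vcond_def HS_def DP_def; simp only: evs; auto)
lemma v18: "phi ` vfil {3, 7, 11, 12} {5, 9, 12, 13} = {3, 13, 14}" by (unfold vfil_def vcond_def HS_def DP_def; simp only: evs; auto)
lemma v19: "phi ` vfil {3, 7, 11, 12} {5, 10, 11, 14} = {3, 9, 10}" by (unfold vfil_def vcond_def HS_def DP_def; simp only: evs; auto)
lemma v20: "phi ` vfil {3, 7, 11, 12} {6, 7, 9, 14} = {3, 5, 6}" by (unfold vfil_def vcond_def HS_def DP_def; simp only: evs; auto)
lemma v21: "phi ` vfil {3, 7, 11, 12} {6, 9, 11, 13} = {3, 9, 10}" by (unfold vfil_def vcond_def HS_def DP_def; simp only: evs; auto)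
lemma v22: "phi ` vfil {3, 7, 11, 12} {6, 10, 12, 14} = {3, 13, 14}" by (unfold vfil_def vcond_def HS_def DP_def; simp only: evs; auto)
lemma v23: "phi ` vfil {3, 7, 11, 12} {3, 5, 6, 9, 10, 12} = {3, 12, 15}" by (unfold vfil_def vcond_def HS_def DP_def; simp only: evs; auto)
lemma v24: "phi ` vfil {3, 7, 11, 12} {3, 5, 6, 11, 13, 14} = {3, 8, 11}" by (unfold vfil_def vcond_def HS_def DP_def; simp only: evs; auto)
lemma v25: "phi ` vfil {3, 7, 11, 12} {3, 7, 9, 10, 13, 14} = {3, 4, 7}" by (unfold vfil_def vcond_def HS_def DP_def; simp only: evs; auto)
lemma v26: "phi ` vfil {3, 7, 11, 12} {5, 7, 9, 11, 12, 14} = {1, 2, 3}" by (unfold vfil_def vcond_def HS_def DP_def; simp only: evs; auto)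
lemma v27: "phi ` vfil {3, 7, 11, 12} {6, 7, 10, 11, 12, 13} = {1, 2, 3}" by (unfold vfil_def vcond_def HS_def DP_def; simp only: evs; auto)
lemma v28: "phi ` vfil {3, 9, 10, 11} {3, 5, 6, 7} = {7, 11, 12}" by (unfold vfil_def vcond_def HS_def DP_def; simp only: evs; auto)
lemma v29: "phi ` vfil {3, 9, 10, 11} {3, 7, 11, 12} = {3, 8, 11}" by (unfold vfil_def vcond_def HS_def DP_def; simp only: evs; auto)
lemma v30: "phi ` vfil {3, 9, 10, 11} {3, 12, 13, 14} = {7, 11, 12}" by (unfold vfil_def vcond_def HS_def DP_def; simp only: evs; auto)
lemma v31: "phi ` vfil {3, 9, 10, 11} {5, 7, 10, 13} = {5, 11, 14}" by (unfold vfil_def vcond_def HS_def DP_def; simp only: evs; auto)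
lemma v32: "phi ` vfil {3, 9, 10, 11} {5, 9, 12, 13} = {6, 11, 13}" by (unfold vfil_def vcond_def HS_def DP_def; simp only: evs; auto)
lemma v33: "phi ` vfil {3, 9, 10, 11} {5, 10, 11, 14} = {1, 10, 11}" by (unfold vfil_def vcond_def HS_def DP_def; simp only: evs; auto)
lemma v34: "phi ` vfil {3, 9, 10, 11} {6, 7, 9, 14} = {6, 11, 13}" by (unfold vfil_def vcond_def HS_def DP_def; simp only: evs; auto)
lemma v35: "phi ` vfil {3, 9, 10, 11} {6, 9, 11, 13} = {2, 9, 11}" by (unfold vfil_def vcond_def HS_def DP_def; simp only: evs; auto)
lemma v36: "phi ` vfil {3, 9, 10, 11} {6, 10, 12, 14} = {5, 11, 14}" by (unfold vfil_def vcond_def HS_def DP_def; simp only: evs; auto)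
lemma v37: "phi ` vfil {3, 9, 10, 11} {3, 5, 6, 9, 10, 12} = {4, 11, 15}" by (unfold vfil_def vcond_def HS_def DP_def; simp only: evs; auto)
lemma v38: "phi ` vfil {3, 9, 10, 11} {3, 5, 6, 11, 13, 14} = {3, 8, 11}" by (unfold vfil_def vcond_def HS_def DP_def; simp only: evs; auto)
lemma v39: "phi ` vfil {3, 9, 10, 11} {3, 7, 9, 10, 13, 14} = {4, 11, 15}" by (unfold vfil_def vcond_def HS_def DP_def; simp only: evs; auto)
lemma v40: "phi ` vfil {3, 9, 10, 11} {5, 7, 9, 11, 12, 14} = {2, 9, 11}" by (unfold vfil_def vcond_def HS_def DP_def; simp only: evs; auto)
lemma v41: "phi ` vfil {3, 9, 10, 11} {6, 7, 10, 11, 12, 13} = {1, 10, 11}" by (unfold vfil_def vcond_def HS_def DP_def; simp only: evs; auto)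
lemma v42: "phi ` vfil {3, 12, 13, 14} {3, 5, 6, 7} = {7, 11, 12}" by (unfold vfil_def vcond_def HS_def DP_def; simp only: evs; auto)
lemma v43: "phi ` vfil {3, 12, 13, 14} {3, 7, 11, 12} = {3, 12, 15}" by (unfold vfil_def vcond_def HS_def DP_def; simp only: evs; auto)
lemma v44: "phi ` vfil {3, 12, 13, 14} {3, 9, 10, 11} = {7, 11, 12}" by (unfold vfil_def vcond_def HS_def DP_def; simp only: evs; auto)
lemma v45: "phi ` vfil {3, 12, 13, 14} {5, 7, 10, 13} = {5, 9, 12}" by (unfold vfil_def vcond_def HS_def DP_def; simp only: evs; auto)
lemma v46: "phi ` vfil {3, 12, 13, 14} {5, 9, 12, 13} = {1, 12, 13}" by (unfold vfil_def vcond_def HS_def DP_def; simp only: evs; auto)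
lemma v47: "phi ` vfil {3, 12, 13, 14} {5, 10, 11, 14} = {6, 10, 12}" by (unfold vfil_def vcond_def HS_def DP_def; simp only: evs; auto)
lemma v48: "phi ` vfil {3, 12, 13, 14} {6, 7, 9, 14} = {6, 10, 12}" by (unfold vfil_def vcond_def HS_def DP_def; simp only: evs; auto)
lemma v49: "phi ` vfil {3, 12, 13, 14} {6, 9, 11, 13} = {5, 9, 12}" by (unfold vfil_def vcond_def HS_def DP_def; simp only: evs; auto)
lemma v50: "phi ` vfil {3, 12, 13, 14} {6, 10, 12, 14} = {2, 12, 14}" by (unfold vfil_def vcond_def HS_def DP_def; simp only: evs; auto)
lemma v51: "phi ` vfil {3, 12, 13, 14} {3, 5, 6, 9, 10, 12} = {3, 12, 15}" by (unfold vfil_def vcond_def HS_def DP_def; simp only: evs; auto)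
lemma v52: "phi ` vfil {3, 12, 13, 14} {3, 5, 6, 11, 13, 14} = {4, 8, 12}" by (unfold vfil_def vcond_def HS_def DP_def; simp only: evs; auto)
lemma v53: "phi ` vfil {3, 12, 13, 14} {3, 7, 9, 10, 13, 14} = {4, 8, 12}" by (unfold vfil_def vcond_def HS_def DP_def; simp only: evs; auto)
lemma v54: "phi ` vfil {3, 12, 13, 14} {5, 7, 9, 11, 12, 14} = {2, 12, 14}" by (unfold vfil_def vcond_def HS_def DP_def; simp only: evs; auto)
lemma v55: "phi ` vfil {3, 12, 13, 14} {6, 7, 10, 11, 12, 13} = {1, 12, 13}" by (unfold vfil_def vcond_def HS_def DP_def; simp only: evs; auto)
lemma v56: "phi ` vfil {5, 7, 10, 13} {3, 5, 6, 7} = {2, 5, 7}" by (unfold vfil_def vcond_def HS_def DP_def; simp only: evs; auto)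
lemma v57: "phi ` vfil {5, 7, 10, 13} {3, 7, 11, 12} = {3, 5, 6}" by (unfold vfil_def vcond_def HS_def DP_def; simp only: evs; auto)
lemma v58: "phi ` vfil {5, 7, 10, 13} {3, 9, 10, 11} = {5, 11, 14}" by (unfold vfil_def vcond_def HS_def DP_def; simp only: evs; auto)
lemma v59: "phi ` vfil {5, 7, 10, 13} {3, 12, 13, 14} = {5, 9, 12}" by (unfold vfil_def vcond_def HS_def DP_def; simp only: evs; auto)
lemma v60: "phi ` vfil {5, 7, 10, 13} {5, 9, 12, 13} = {5, 8, 13}" by (unfold vfil_def vcond_def HS_def DP_def; simp only: evs; auto)
lemma v61: "phi ` vfil {5, 7, 10, 13} {5, 10, 11, 14} = {5, 10, 15}" by (unfold vfil_def vcond_def HS_def DP_def; simp only: evs; auto)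
lemma v62: "phi ` vfil {5, 7, 10, 13} {6, 7, 9, 14} = {3, 5, 6}" by (unfold vfil_def vcond_def HS_def DP_def; simp only: evs; auto)
lemma v63: "phi ` vfil {5, 7, 10, 13} {6, 9, 11, 13} = {5, 9, 12}" by (unfold vfil_def vcond_def HS_def DP_def; simp only: evs; auto)
lemma v64: "phi ` vfil {5, 7, 10, 13} {6, 10, 12, 14} = {5, 11, 14}" by (unfold vfil_def vcond_def HS_def DP_def; simp only: evs; auto)
lemma v65: "phi ` vfil {5, 7, 10, 13} {3, 5, 6, 9, 10, 12} = {5, 10, 15}" by (unfold vfil_def vcond_def HS_def DP_def; simp only: evs; auto)
lemma v66: "phi ` vfil {5, 7, 10, 13} {3, 5, 6, 11, 13, 14} = {5, 8, 13}" by (unfold vfil_def vcond_def HS_def DP_def; simp only: evs; auto)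
lemma v67: "phi ` vfil {5, 7, 10, 13} {3, 7, 9, 10, 13, 14} = {1, 4, 5}" by (unfold vfil_def vcond_def HS_def DP_def; simp only: evs; auto)
lemma v68: "phi ` vfil {5, 7, 10, 13} {5, 7, 9, 11, 12, 14} = {2, 5, 7}" by (unfold vfil_def vcond_def HS_def DP_def; simp only: evs; auto)
lemma v69: "phi ` vfil {5, 7, 10, 13} {6, 7, 10, 11, 12, 13} = {1, 4, 5}" by (unfold vfil_def vcond_def HS_def DP_def; simp only: evs; auto)
lemma v70: "phi ` vfil {5, 9, 12, 13} {3, 5, 6, 7} = {7, 10, 13}" by (unfold vfil_def vcond_def HS_def DP_def; simp only: evs; auto)
lemma v71: "phi ` vfil {5, 9, 12, 13} {3, 7, 11, 12} = {3, 13, 14}" by (unfold vfil_def vcond_def HS_def DP_def; simp only: evs; auto)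
lemma v72: "phi ` vfil {5, 9, 12, 13} {3, 9, 10, 11} = {6, 11, 13}" by (unfold vfil_def vcond_def HS_def DP_def; simp only: evs; auto)
lemma v73: "phi ` vfil {5, 9, 12, 13} {3, 12, 13, 14} = {1, 12, 13}" by (unfold vfil_def vcond_def HS_def DP_def; simp only: evs; auto)
lemma v74: "phi ` vfil {5, 9, 12, 13} {5, 7, 10, 13} = {5, 8, 13}" by (unfold vfil_def vcond_def HS_def DP_def; simp only: evs; auto)
lemma v75: "phi ` vfil {5, 9, 12, 13} {5, 10, 11, 14} = {7, 10, 13}" by (unfold vfil_def vcond_def HS_def DP_def; simp only: evs; auto)
lemma v76: "phi ` vfil {5, 9, 12, 13} {6, 7, 9, 14} = {6, 11, 13}" by (unfold vfil_def vcond_def HS_def DP_def; simp only: evs; auto)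
lemma v77: "phi ` vfil {5, 9, 12, 13} {6, 9, 11, 13} = {4, 9, 13}" by (unfold vfil_def vcond_def HS_def DP_def; simp only: evs; auto)
lemma v78: "phi ` vfil {5, 9, 12, 13} {6, 10, 12, 14} = {3, 13, 14}" by (unfold vfil_def vcond_def HS_def DP_def; simp only: evs; auto)
lemma v79: "phi ` vfil {5, 9, 12, 13} {3, 5, 6, 9, 10, 12} = {2, 13, 15}" by (unfold vfil_def vcond_def HS_def DP_def; simp only: evs; auto)
lemma v80: "phi ` vfil {5, 9, 12, 13} {3, 5, 6, 11, 13, 14} = {5, 8, 13}" by (unfold vfil_def vcond_def HS_def DP_def; simp only: evs; auto)
lemma v81: "phi ` vfil {5, 9, 12, 13} {3, 7, 9, 10, 13, 14} = {4, 9, 13}" by (unfold vfil_def vcond_def HS_def DP_def; simp only: evs; auto)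
lemma v82: "phi ` vfil {5, 9, 12, 13} {5, 7, 9, 11, 12, 14} = {2, 13, 15}" by (unfold vfil_def vcond_def HS_def DP_def; simp only: evs; auto)
lemma v83: "phi ` vfil {5, 9, 12, 13} {6, 7, 10, 11, 12, 13} = {1, 12, 13}" by (unfold vfil_def vcond_def HS_def DP_def; simp only: evs; auto)
lemma v84: "phi ` vfil {5, 10, 11, 14} {3, 5, 6, 7} = {7, 10, 13}" by (unfold vfil_def vcond_def HS_def DP_def; simp only: evs; auto)
lemma v85: "phi ` vfil {5, 10, 11, 14} {3, 7, 11, 12} = {3, 9, 10}" by (unfold vfil_def vcond_def HS_def DP_def; simp only: evs; auto)
lemma v86: "phi ` vfil {5, 10, 11, 14} {3, 9, 10, 11} = {1, 10, 11}" by (unfold vfil_def vcond_def HS_def DP_def; simp only: evs; auto)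
lemma v87: "phi ` vfil {5, 10, 11, 14} {3, 12, 13, 14} = {6, 10, 12}" by (unfold vfil_def vcond_def HS_def DP_def; simp only: evs; auto)
lemma v88: "phi ` vfil {5, 10, 11, 14} {5, 7, 10, 13} = {5, 10, 15}" by (unfold vfil_def vcond_def HS_def DP_def; simp only: evs; auto)
lemma v89: "phi ` vfil {5, 10, 11, 14} {5, 9, 12, 13} = {7, 10, 13}" by (unfold vfil_def vcond_def HS_def DP_def; simp only: evs; auto)
lemma v90: "phi ` vfil {5, 10, 11, 14} {6, 7, 9, 14} = {6, 10, 12}" by (unfold vfil_def vcond_def HS_def DP_def; simp only: evs; auto)
lemma v91: "phi ` vfil {5, 10, 11, 14} {6, 9, 11, 13} = {3, 9, 10}" by (unfold vfil_def vcond_def HS_def DP_def; simp only: evs; auto)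
lemma v92: "phi ` vfil {5, 10, 11, 14} {6, 10, 12, 14} = {4, 10, 14}" by (unfold vfil_def vcond_def HS_def DP_def; simp only: evs; auto)
lemma v93: "phi ` vfil {5, 10, 11, 14} {3, 5, 6, 9, 10, 12} = {5, 10, 15}" by (unfold vfil_def vcond_def HS_def DP_def; simp only: evs; auto)
lemma v94: "phi ` vfil {5, 10, 11, 14} {3, 5, 6, 11, 13, 14} = {2, 8, 10}" by (unfold vfil_def vcond_def HS_def DP_def; simp only: evs; auto)
lemma v95: "phi ` vfil {5, 10, 11, 14} {3, 7, 9, 10, 13, 14} = {4, 10, 14}" by (unfold vfil_def vcond_def HS_def DP_def; simp only: evs; auto)
lemma v96: "phi ` vfil {5, 10, 11, 14} {5, 7, 9, 11, 12, 14} = {2, 8, 10}" by (unfold vfil_def vcond_def HS_def DP_def; simp only: evs; auto)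
lemma v97: "phi ` vfil {5, 10, 11, 14} {6, 7, 10, 11, 12, 13} = {1, 10, 11}" by (unfold vfil_def vcond_def HS_def DP_def; simp only: evs; auto)
lemma v98: "phi ` vfil {6, 7, 9, 14} {3, 5, 6, 7} = {1, 6, 7}" by (unfold vfil_def vcond_def HS_def DP_def; simp only: evs; auto)
lemma v99: "phi ` vfil {6, 7, 9, 14} {3, 7, 11, 12} = {3, 5, 6}" by (unfold vfil_def vcond_def HS_def DP_def; simp only: evs; auto)
lemma v100: "phi ` vfil {6, 7, 9, 14} {3, 9, 10, 11} = {6, 11, 13}" by (unfold vfil_def vcond_def HS_def DP_def; simp only: evs; auto)
lemma v101: "phi ` vfil {6, 7, 9, 14} {3, 12, 13, 14} = {6, 10, 12}" by (unfold vfil_def vcond_def HS_def DP_def; simp only: evs; auto)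
lemma v102: "phi ` vfil {6, 7, 9, 14} {5, 7, 10, 13} = {3, 5, 6}" by (unfold vfil_def vcond_def HS_def DP_def; simp only: evs; auto)
lemma v103: "phi ` vfil {6, 7, 9, 14} {5, 9, 12, 13} = {6, 11, 13}" by (unfold vfil_def vcond_def HS_def DP_def; simp only: evs; auto)
lemma v104: "phi ` vfil {6, 7, 9, 14} {5, 10, 11, 14} = {6, 10, 12}" by (unfold vfil_def vcond_def HS_def DP_def; simp only: evs; auto)
lemma v105: "phi ` vfil {6, 7, 9, 14} {6, 9, 11, 13} = {6, 9, 15}" by (unfold vfil_def vcond_def HS_def DP_def; simp only: evs; auto)
lemma v106: "phi ` vfil {6, 7, 9, 14} {6, 10, 12, 14} = {6, 8, 14}" by (unfold vfil_def vcond_def HS_def DP_def; simp only: evs; auto)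
lemma v107: "phi ` vfil {6, 7, 9, 14} {3, 5, 6, 9, 10, 12} = {6, 9, 15}" by (unfold vfil_def vcond_def HS_def DP_def; simp only: evs; auto)
lemma v108: "phi ` vfil {6, 7, 9, 14} {3, 5, 6, 11, 13, 14} = {6, 8, 14}" by (unfold vfil_def vcond_def HS_def DP_def; simp only: evs; auto)
lemma v109: "phi ` vfil {6, 7, 9, 14} {3, 7, 9, 10, 13, 14} = {2, 4, 6}" by (unfold vfil_def vcond_def HS_def DP_def; simp only: evs; auto)
lemma v110: "phi ` vfil {6, 7, 9, 14} {5, 7, 9, 11, 12, 14} = {2, 4, 6}" by (unfold vfil_def vcond_def HS_def DP_def; simp only: evs; auto)
lemma v111: "phi ` vfil {6, 7, 9, 14} {6, 7, 10, 11, 12, 13} = {1, 6, 7}" by (unfold vfil_def vcond_def HS_def DP_def; simp only: evs; auto)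
lemma v112: "phi ` vfil {6, 9, 11, 13} {3, 5, 6, 7} = {7, 9, 14}" by (unfold vfil_def vcond_def HS_def DP_def; simp only: evs; auto)
lemma v113: "phi ` vfil {6, 9, 11, 13} {3, 7, 11, 12} = {3, 9, 10}" by (unfold vfil_def vcond_def HS_def DP_def; simp only: evs; auto)
lemma v114: "phi ` vfil {6, 9, 11, 13} {3, 9, 10, 11} = {2, 9, 11}" by (unfold vfil_def vcond_def HS_def DP_def; simp only: evs; auto)
lemma v115: "phi ` vfil {6, 9, 11, 13} {3, 12, 13, 14} = {5, 9, 12}" by (unfold vfil_def vcond_def HS_def DP_def; simp only: evs; auto)
lemma v116: "phi ` vfil {6, 9, 11, 13} {5, 7, 10, 13} = {5, 9, 12}" by (unfold vfil_def vcond_def HS_def DP_def; simp only: evs; auto)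
lemma v117: "phi ` vfil {6, 9, 11, 13} {5, 9, 12, 13} = {4, 9, 13}" by (unfold vfil_def vcond_def HS_def DP_def; simp only: evs; auto)
lemma v118: "phi ` vfil {6, 9, 11, 13} {5, 10, 11, 14} = {3, 9, 10}" by (unfold vfil_def vcond_def HS_def DP_def; simp only: evs; auto)
lemma v119: "phi ` vfil {6, 9, 11, 13} {6, 7, 9, 14} = {6, 9, 15}" by (unfold vfil_def vcond_def HS_def DP_def; simp only: evs; auto)
lemma v120: "phi ` vfil {6, 9, 11, 13} {6, 10, 12, 14} = {7, 9, 14}" by (unfold vfil_def vcond_def HS_def DP_def; simp only: evs; auto)
lemma v121: "phi ` vfil {6, 9, 11, 13} {3, 5, 6, 9, 10, 12} = {6, 9, 15}" by (unfold vfil_def vcond_def HS_def DP_def; simp only: evs; auto)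
lemma v122: "phi ` vfil {6, 9, 11, 13} {3, 5, 6, 11, 13, 14} = {1, 8, 9}" by (unfold vfil_def vcond_def HS_def DP_def; simp only: evs; auto)
lemma v123: "phi ` vfil {6, 9, 11, 13} {3, 7, 9, 10, 13, 14} = {4, 9, 13}" by (unfold vfil_def vcond_def HS_def DP_def; simp only: evs; auto)
lemma v124: "phi ` vfil {6, 9, 11, 13} {5, 7, 9, 11, 12, 14} = {2, 9, 11}" by (unfold vfil_def vcond_def HS_def DP_def; simp only: evs; auto)
lemma v125: "phi ` vfil {6, 9, 11, 13} {6, 7, 10, 11, 12, 13} = {1, 8, 9}" by (unfold vfil_def vcond_def HS_def DP_def; simp only: evs; auto)
lemma v126: "phi ` vfil {6, 10, 12, 14} {3, 5, 6, 7} = {7, 9, 14}" by (unfold vfil_def vcond_def HS_def DP_def; simp only: evs; auto)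
lemma v127: "phi ` vfil {6, 10, 12, 14} {3, 7, 11, 12} = {3, 13, 14}" by (unfold vfil_def vcond_def HS_def DP_def; simp only: evs; auto)
lemma v128: "phi ` vfil {6, 10, 12, 14} {3, 9, 10, 11} = {5, 11, 14}" by (unfold vfil_def vcond_def HS_def DP_def; simp only: evs; auto)
lemma v129: "phi ` vfil {6, 10, 12, 14} {3, 12, 13, 14} = {2, 12, 14}" by (unfold vfil_def vcond_def HS_def DP_def; simp only: evs; auto)
lemma v130: "phi ` vfil {6, 10, 12, 14} {5, 7, 10, 13} = {5, 11, 14}" by (unfold vfil_def vcond_def HS_def DP_def; simp only: evs; auto)
lemma v131: "phi ` vfil {6, 10, 12, 14} {5, 9, 12, 13} = {3, 13, 14}" by (unfold vfil_def vcond_def HS_def DP_def; simp only: evs; auto)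
lemma v132: "phi ` vfil {6, 10, 12, 14} {5, 10, 11, 14} = {4, 10, 14}" by (unfold vfil_def vcond_def HS_def DP_def; simp only: evs; auto)
lemma v133: "phi ` vfil {6, 10, 12, 14} {6, 7, 9, 14} = {6, 8, 14}" by (unfold vfil_def vcond_def HS_def DP_def; simp only: evs; auto)
lemma v134: "phi ` vfil {6, 10, 12, 14} {6, 9, 11, 13} = {7, 9, 14}" by (unfold vfil_def vcond_def HS_def DP_def; simp only: evs; auto)
lemma v135: "phi ` vfil {6, 10, 12, 14} {3, 5, 6, 9, 10, 12} = {1, 14, 15}" by (unfold vfil_def vcond_def HS_def DP_def; simp only: evs; auto)
lemma v136: "phi ` vfil {6, 10, 12, 14} {3, 5, 6, 11, 13, 14} = {6, 8, 14}" by (unfold vfil_def vcond_def HS_def DP_def; simp only: evs; auto)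
lemma v137: "phi ` vfil {6, 10, 12, 14} {3, 7, 9, 10, 13, 14} = {4, 10, 14}" by (unfold vfil_def vcond_def HS_def DP_def; simp only: evs; auto)
lemma v138: "phi ` vfil {6, 10, 12, 14} {5, 7, 9, 11, 12, 14} = {2, 12, 14}" by (unfold vfil_def vcond_def HS_def DP_def; simp only: evs; auto)
lemma v139: "phi ` vfil {6, 10, 12, 14} {6, 7, 10, 11, 12, 13} = {1, 14, 15}" by (unfold vfil_def vcond_def HS_def DP_def; simp only: evs; auto)
lemma v140: "phi ` vfil {3, 5, 6, 9, 10, 12} {3, 5, 6, 7} = {7, 8, 15}" by (unfold vfil_def vcond_def HS_def DP_def; simp only: evs; auto)
lemma v141: "phi ` vfil {3, 5, 6, 9, 10, 12} {3, 7, 11, 12} = {3, 12, 15}" by (unfold vfil_def vcond_def HS_def DP_def; simp only: evs; auto)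
lemma v142: "phi ` vfil {3, 5, 6, 9, 10, 12} {3, 9, 10, 11} = {4, 11, 15}" by (unfold vfil_def vcond_def HS_def DP_def; simp only: evs; auto)
lemma v143: "phi ` vfil {3, 5, 6, 9, 10, 12} {3, 12, 13, 14} = {3, 12, 15}" by (unfold vfil_def vcond_def HS_def DP_def; simp only: evs; auto)
lemma v144: "phi ` vfil {3, 5, 6, 9, 10, 12} {5, 7, 10, 13} = {5, 10, 15}" by (unfold vfil_def vcond_def HS_def DP_def; simp only: evs; auto)
lemma v145: "phi ` vfil {3, 5, 6, 9, 10, 12} {5, 9, 12, 13} = {2, 13, 15}" by (unfold vfil_def vcond_def HS_def DP_def; simp only: evs; auto)
lemma v146: "phi ` vfil {3, 5, 6, 9, 10, 12} {5, 10, 11, 14} = {5, 10, 15}" by (unfold vfil_def vcond_def HS_def DP_def; simp only: evs; auto)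
lemma v147: "phi ` vfil {3, 5, 6, 9, 10, 12} {6, 7, 9, 14} = {6, 9, 15}" by (unfold vfil_def vcond_def HS_def DP_def; simp only: evs; auto)
lemma v148: "phi ` vfil {3, 5, 6, 9, 10, 12} {6, 9, 11, 13} = {6, 9, 15}" by (unfold vfil_def vcond_def HS_def DP_def; simp only: evs; auto)
lemma v149: "phi ` vfil {3, 5, 6, 9, 10, 12} {6, 10, 12, 14} = {1, 14, 15}" by (unfold vfil_def vcond_def HS_def DP_def; simp only: evs; auto)
lemma v150: "phi ` vfil {3, 5, 6, 9, 10, 12} {3, 5, 6, 11, 13, 14} = {7, 8, 15}" by (unfold vfil_def vcond_def HS_def DP_def; simp only: evs; auto)
lemma v151: "phi ` vfil {3, 5, 6, 9, 10, 12} {3, 7, 9, 10, 13, 14} = {4, 11, 15}" by (unfold vfil_def vcond_def HS_def DP_def; simp only: evs; auto)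
lemma v152: "phi ` vfil {3, 5, 6, 9, 10, 12} {5, 7, 9, 11, 12, 14} = {2, 13, 15}" by (unfold vfil_def vcond_def HS_def DP_def; simp only: evs; auto)
lemma v153: "phi ` vfil {3, 5, 6, 9, 10, 12} {6, 7, 10, 11, 12, 13} = {1, 14, 15}" by (unfold vfil_def vcond_def HS_def DP_def; simp only: evs; auto)
lemma v154: "phi ` vfil {3, 5, 6, 11, 13, 14} {3, 5, 6, 7} = {7, 8, 15}" by (unfold vfil_def vcond_def HS_def DP_def; simp only: evs; auto)
lemma v155: "phi ` vfil {3, 5, 6, 11, 13, 14} {3, 7, 11, 12} = {3, 8, 11}" by (unfold vfil_def vcond_def HS_def DP_def; simp only: evs; auto)
lemma v156: "phi ` vfil {3, 5, 6, 11, 13, 14} {3, 9, 10, 11} = {3, 8, 11}" by (unfold vfil_def vcond_def HS_def DP_def; simp only: evs; auto)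
lemma v157: "phi ` vfil {3, 5, 6, 11, 13, 14} {3, 12, 13, 14} = {4, 8, 12}" by (unfold vfil_def vcond_def HS_def DP_def; simp only: evs; auto)
lemma v158: "phi ` vfil {3, 5, 6, 11, 13, 14} {5, 7, 10, 13} = {5, 8, 13}" by (unfold vfil_def vcond_def HS_def DP_def; simp only: evs; auto)
lemma v159: "phi ` vfil {3, 5, 6, 11, 13, 14} {5, 9, 12, 13} = {5, 8, 13}" by (unfold vfil_def vcond_def HS_def DP_def; simp only: evs; auto)
lemma v160: "phi ` vfil {3, 5, 6, 11, 13, 14} {5, 10, 11, 14} = {2, 8, 10}" by (unfold vfil_def vcond_def HS_def DP_def; simp only: evs; auto)
lemma v161: "phi ` vfil {3, 5, 6, 11, 13, 14} {6, 7, 9, 14} = {6, 8, 14}" by (unfold vfil_def vcond_def HS_def DP_def; simp only: evs; auto)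
lemma v162: "phi ` vfil {3, 5, 6, 11, 13, 14} {6, 9, 11, 13} = {1, 8, 9}" by (unfold vfil_def vcond_def HS_def DP_def; simp only: evs; auto)
lemma v163: "phi ` vfil {3, 5, 6, 11, 13, 14} {6, 10, 12, 14} = {6, 8, 14}" by (unfold vfil_def vcond_def HS_def DP_def; simp only: evs; auto)
lemma v164: "phi ` vfil {3, 5, 6, 11, 13, 14} {3, 5, 6, 9, 10, 12} = {7, 8, 15}" by (unfold vfil_def vcond_def HS_def DP_def; simp only: evs; auto)
lemma v165: "phi ` vfil {3, 5, 6, 11, 13, 14} {3, 7, 9, 10, 13, 14} = {4, 8, 12}" by (unfold vfil_def vcond_def HS_def DP_def; simp only: evs; auto)
lemma v166: "phi ` vfil {3, 5, 6, 11, 13, 14} {5, 7, 9, 11, 12, 14} = {2, 8, 10}" by (unfold vfil_def vcond_def HS_def DP_def; simp only: evs; auto)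
lemma v167: "phi ` vfil {3, 5, 6, 11, 13, 14} {6, 7, 10, 11, 12, 13} = {1, 8, 9}" by (unfold vfil_def vcond_def HS_def DP_def; simp only: evs; auto)
lemma v168: "phi ` vfil {3, 7, 9, 10, 13, 14} {3, 5, 6, 7} = {3, 4, 7}" by (unfold vfil_def vcond_def HS_def DP_def; simp only: evs; auto)
lemma v169: "phi ` vfil {3, 7, 9, 10, 13, 14} {3, 7, 11, 12} = {3, 4, 7}" by (unfold vfil_def vcond_def HS_def DP_def; simp only: evs; auto)
lemma v170: "phi ` vfil {3, 7, 9, 10, 13, 14} {3, 9, 10, 11} = {4, 11, 15}" by (unfold vfil_def vcond_def HS_def DP_def; simp only: evs; auto)
lemma v171: "phi ` vfil {3, 7, 9, 10, 13, 14} {3, 12, 13, 14} = {4, 8, 12}" by (unfold vfil_def vcond_def HS_def DP_def; simp only: evs; auto)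
lemma v172: "phi ` vfil {3, 7, 9, 10, 13, 14} {5, 7, 10, 13} = {1, 4, 5}" by (unfold vfil_def vcond_def HS_def DP_def; simp only: evs; auto)
lemma v173: "phi ` vfil {3, 7, 9, 10, 13, 14} {5, 9, 12, 13} = {4, 9, 13}" by (unfold vfil_def vcond_def HS_def DP_def; simp only: evs; auto)
lemma v174: "phi ` vfil {3, 7, 9, 10, 13, 14} {5, 10, 11, 14} = {4, 10, 14}" by (unfold vfil_def vcond_def HS_def DP_def; simp only: evs; auto)
lemma v175: "phi ` vfil {3, 7, 9, 10, 13, 14} {6, 7, 9, 14} = {2, 4, 6}" by (unfold vfil_def vcond_def HS_def DP_def; simp only: evs; auto)
lemma v176: "phi ` vfil {3, 7, 9, 10, 13, 14} {6, 9, 11, 13} = {4, 9, 13}" by (unfold vfil_def vcond_def HS_def DP_def; simp only: evs; auto)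
lemma v177: "phi ` vfil {3, 7, 9, 10, 13, 14} {6, 10, 12, 14} = {4, 10, 14}" by (unfold vfil_def vcond_def HS_def DP_def; simp only: evs; auto)
lemma v178: "phi ` vfil {3, 7, 9, 10, 13, 14} {3, 5, 6, 9, 10, 12} = {4, 11, 15}" by (unfold vfil_def vcond_def HS_def DP_def; simp only: evs; auto)
lemma v179: "phi ` vfil {3, 7, 9, 10, 13, 14} {3, 5, 6, 11, 13, 14} = {4, 8, 12}" by (unfold vfil_def vcond_def HS_def DP_def; simp only: evs; auto)
lemma v180: "phi ` vfil {3, 7, 9, 10, 13, 14} {5, 7, 9, 11, 12, 14} = {2, 4, 6}" by (unfold vfil_def vcond_def HS_def DP_def; simp only: evs; auto)
lemma v181: "phi ` vfil {3, 7, 9, 10, 13, 14} {6, 7, 10, 11, 12, 13} = {1, 4, 5}" by (unfold vfil_def vcond_def HS_def DP_def; simp only: evs; auto)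
lemma v182: "phi ` vfil {5, 7, 9, 11, 12, 14} {3, 5, 6, 7} = {2, 5, 7}" by (unfold vfil_def vcond_def HS_def DP_def; simp only: evs; auto)
lemma v183: "phi ` vfil {5, 7, 9, 11, 12, 14} {3, 7, 11, 12} = {1, 2, 3}" by (unfold vfil_def vcond_def HS_def DP_def; simp only: evs; auto)
lemma v184: "phi ` vfil {5, 7, 9, 11, 12, 14} {3, 9, 10, 11} = {2, 9, 11}" by (unfold vfil_def vcond_def HS_def DP_def; simp only: evs; auto)
lemma v185: "phi ` vfil {5, 7, 9, 11, 12, 14} {3, 12, 13, 14} = {2, 12, 14}" by (unfold vfil_def vcond_def HS_def DP_def; simp only: evs; auto)
lemma v186: "phi ` vfil {5, 7, 9, 11, 12, 14} {5, 7, 10, 13} = {2, 5, 7}" by (unfold vfil_def vcond_def HS_def DP_def; simp only: evs; auto)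
lemma v187: "phi ` vfil {5, 7, 9, 11, 12, 14} {5, 9, 12, 13} = {2, 13, 15}" by (unfold vfil_def vcond_def HS_def DP_def; simp only: evs; auto)
lemma v188: "phi ` vfil {5, 7, 9, 11, 12, 14} {5, 10, 11, 14} = {2, 8, 10}" by (unfold vfil_def vcond_def HS_def DP_def; simp only: evs; auto)
lemma v189: "phi ` vfil {5, 7, 9, 11, 12, 14} {6, 7, 9, 14} = {2, 4, 6}" by (unfold vfil_def vcond_def HS_def DP_def; simp only: evs; auto)
lemma v190: "phi ` vfil {5, 7, 9, 11, 12, 14} {6, 9, 11, 13} = {2, 9, 11}" by (unfold vfil_def vcond_def HS_def DP_def; simp only: evs; auto)
lemma v191: "phi ` vfil {5, 7, 9, 11, 12, 14} {6, 10, 12, 14} = {2, 12, 14}" by (unfold vfil_def vcond_def HS_def DP_def; simp only: evs; auto)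
lemma v192: "phi ` vfil {5, 7, 9, 11, 12, 14} {3, 5, 6, 9, 10, 12} = {2, 13, 15}" by (unfold vfil_def vcond_def HS_def DP_def; simp only: evs; auto)
lemma v193: "phi ` vfil {5, 7, 9, 11, 12, 14} {3, 5, 6, 11, 13, 14} = {2, 8, 10}" by (unfold vfil_def vcond_def HS_def DP_def; simp only: evs; auto)
lemma v194: "phi ` vfil {5, 7, 9, 11, 12, 14} {3, 7, 9, 10, 13, 14} = {2, 4, 6}" by (unfold vfil_def vcond_def HS_def DP_def; simp only: evs; auto)
lemma v195: "phi ` vfil {5, 7, 9, 11, 12, 14} {6, 7, 10, 11, 12, 13} = {1, 2, 3}" by (unfold vfil_def vcond_def HS_def DP_def; simp only: evs; auto)
lemma v196: "phi ` vfil {6, 7, 10, 11, 12, 13} {3, 5, 6, 7} = {1, 6, 7}" by (unfold vfil_def vcond_def HS_def DP_def; simp only: evs; auto)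
lemma v197: "phi ` vfil {6, 7, 10, 11, 12, 13} {3, 7, 11, 12} = {1, 2, 3}" by (unfold vfil_def vcond_def HS_def DP_def; simp only: evs; auto)
lemma v198: "phi ` vfil {6, 7, 10, 11, 12, 13} {3, 9, 10, 11} = {1, 10, 11}" by (unfold vfil_def vcond_def HS_def DP_def; simp only: evs; auto)
lemma v199: "phi ` vfil {6, 7, 10, 11, 12, 13} {3, 12, 13, 14} = {1, 12, 13}" by (unfold vfil_def vcond_def HS_def DP_def; simp only: evs; auto)
lemma v200: "phi ` vfil {6, 7, 10, 11, 12, 13} {5, 7, 10, 13} = {1, 4, 5}" by (unfold vfil_def vcond_def HS_def DP_def; simp only: evs; auto)
lemma v201: "phi ` vfil {6, 7, 10, 11, 12, 13} {5, 9, 12, 13} = {1, 12, 13}" by (unfold vfil_def vcond_def HS_def DP_def; simp only: evs; auto)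
lemma v202: "phi ` vfil {6, 7, 10, 11, 12, 13} {5, 10, 11, 14} = {1, 10, 11}" by (unfold vfil_def vcond_def HS_def DP_def; simp only: evs; auto)
lemma v203: "phi ` vfil {6, 7, 10, 11, 12, 13} {6, 7, 9, 14} = {1, 6, 7}" by (unfold vfil_def vcond_def HS_def DP_def; simp only: evs; auto)
lemma v204: "phi ` vfil {6, 7, 10, 11, 12, 13} {6, 9, 11, 13} = {1, 8, 9}" by (unfold vfil_def vcond_def HS_def DP_def; simp only: evs; auto)
lemma v205: "phi ` vfil {6, 7, 10, 11, 12, 13} {6, 10, 12, 14} = {1, 14, 15}" by (unfold vfil_def vcond_def HS_def DP_def; simp only: evs; auto)
lemma v206: "phi ` vfil {6, 7, 10, 11, 12, 13} {3, 5, 6, 9, 10, 12} = {1, 14, 15}" by (unfold vfil_def vcond_def HS_def DP_def; simp only: evs; auto)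
lemma v207: "phi ` vfil {6, 7, 10, 11, 12, 13} {3, 5, 6, 11, 13, 14} = {1, 8, 9}" by (unfold vfil_def vcond_def HS_def DP_def; simp only: evs; auto)
lemma v208: "phi ` vfil {6, 7, 10, 11, 12, 13} {3, 7, 9, 10, 13, 14} = {1, 4, 5}" by (unfold vfil_def vcond_def HS_def DP_def; simp only: evs; auto)
lemma v209: "phi ` vfil {6, 7, 10, 11, 12, 13} {5, 7, 9, 11, 12, 14} = {1, 2, 3}" by (unfold vfil_def vcond_def HS_def DP_def; simp only: evs; auto)
lemmas vfacts = v0 v1 v2 v3 v4 v5 v6 v7 v8 v9 v10 v11 v12 v13 v14 v15 v16 v17 v18 v19 v20 v21 v22 v23 v24 v25 v26 v27 v28 v29 v30 v31 v32 v33 v34 v35 v36 v37 v38 v39 v40 v41 v42 v43 v44 v45 v46 v47 v48 v49 v50 v51 v52 v53 v54 v55 v56 v57 v58 v59 v60 v61 v62 v63 v64 v65 v66 v67 v68 v69 v70 v71 v72 v73 v74 v75 v76 v77 v78 v79 v80 v81 v82 v83 v84 v85 v86 v87 v88 v89 v90 v91 v92 v93 v94 v95 v96 v97 v98 v99 v100 v101 v102 v103 v104 v105 v106 v107 v108 v109 v110 v111 v112 v113 v114 v115 v116 v117 v118 v119 v120 v121 v122 v123 v124 v125 v126 v127 v128 v129 v130 v131 v132 v133 v134 v135 v136 v137 v138 v139 v140 v141 v142 v143 v144 v145 v146 v147 v148 v149 v150 v151 v152 v153 v154 v155 v156 v157 v158 v159 v160 v161 v162 v163 v164 v165 v166 v167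 v168 v169 v170 v171 v172 v173 v174 v175 v176 v177 v178 v179 v180 v181 v182 v183 v184 v185 v186 v187 v188 v189 v190 v191 v192 v193 v194 v195 v196 v197 v198 v199 v200 v201 v202 v203 v204 v205 v206 v207 v208 v209

lemma BIG: "\<forall>A\<in>HS. \<forall>B\<in>HS. A \<noteq> B \<longrightarrow> phi ` vfil A B \<in> DT \<union> OT"
  unfolding HS_def by (simp only: ball_ins ball_emp vfacts DT_def OT_def Un_iff insert_iff simp_thms)

lemma vl_img: "(\<lambda>V. phi ` V) ` veldkamp_lines DP DT = DT \<union> OT"
proof
  show "(\<lambda>V. phi ` V) ` veldkamp_lines DP DT \<subseteq> DT \<union> OT"
  proof
    fix W assume "W \<in> (\<lambda>V. phi ` V) ` veldkamp_lines DP DT"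
    then obtain A B where ab: "geom_hyperplane DP DT A" "geom_hyperplane DP DT B" "A \<noteq> B"
      "W = phi ` veldkamp_line DP DT A B" unfolding veldkamp_lines_def by blast
    then have h: "A \<in> HS" "B \<in> HS" unfolding HS_eq[symmetric] hyperplanes_def by auto
    then have "W = phi ` vfil A B" using ab(4) vline_vfil by simp
    then show "W \<in> DT \<union> OT" using BIG h ab(3) by blast
  qed
  have "DT \<union> OT \<subseteq> IMG"
    unfolding DT_def OT_def
    by (simp only: Un_subset_iff insert_subset empty_subsetI wall simp_thms)
  then show "DT \<union> OT \<subseteq> (\<lambda>V. phi ` V) ` veldkamp_lines DP DT" unfolding IMG_def .
qed

lemma part4b: "bij_betw (\<lambda>V. phi ` V) (veldkamp_lines DP DT) (DT \<union> OT)"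
proof -
  have "veldkamp_lines DP DT \<subseteq> Pow HS"
    by (auto simp: veldkamp_lines_def veldkamp_line_def HS_eq[symmetric] hyperplanes_def)
  moreover have "inj_on (\<lambda>V. phi ` V) (Pow HS)"
    using part4a inj_on_image_Pow unfolding bij_betw_def by blast
  ultimately have "inj_on (\<lambda>V. phi ` V) (veldkamp_lines DP DT)" by (rule inj_on_subset[rotated])
  then show ?thesis unfolding bij_betw_def using vl_img by blast
qed

lemma part4c: "\<forall>H\<in>HS. (card H = 4 \<longleftrightarrow> (\<exists>t\<in>DT. phi H \<in> t)) \<and> (card H = 6 \<longleftrightarrow> phi H \<in> {1,2,4,8,15})
   \<and> (card H = 4 \<longrightarrow> phi H \<in> H \<and> H = insert (phi H) {q \<in> DP. q \<noteq> phi H \<and> \<not> (\<exists>l\<in>DT. phi H \<in> l \<and> q \<in> l)})"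
  unfolding HS_def by (simp only: expand) code_simp

definition swp :: "nat \<Rightarrow> nat \<Rightarrow> nat" where "swp k x = (if x = k then 5 else if x = 5 then k else x)"

lemma pa0: "inc_iso ({3, 5, 6, 9, 10, 12}::nat set) {l \<in> DT. l \<subseteq> {3, 5, 6, 9, 10, 12}} (\<in>) (G2_points 4) (G2_lines 4) (\<subseteq>)"
proof -
  have L: "{l \<in> DT. l \<subseteq> {3, 5, 6, 9, 10, 12}} = {{3, 5, 6}, {3, 9, 10}, {5, 9, 12}, {6, 10, 12}}" unfolding DT_def by code_simp
  show ?thesis unfolding L G2p G2l
  proof (rule inc_iso_I[where f="\<lambda>p. swp 5 ` fD p" and g="\<lambda>l. \<Union>((\<lambda>p. swp 5 ` fD p) ` l)"])
    show "bij_betw (\<lambda>p. swp 5 ` fD p) {3, 5, 6, 9, 10, 12} (Set.filter (\<lambda>s. card s = 2) (Pow {1..4}))"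
      unfolding bij_betw_def inj_on_def by (simp only: expand) code_simp
    show "bij_betw (\<lambda>l. \<Union>((\<lambda>p. swp 5 ` fD p) ` l)) {{3, 5, 6}, {3, 9, 10}, {5, 9, 12}, {6, 10, 12}} (Set.filter (\<lambda>s. card s = 3) (Pow {1..4}))"
      unfolding bij_betw_def inj_on_def by (simp only: expand) code_simp
    show "\<forall>p\<in>{3, 5, 6, 9, 10, 12}. \<forall>l\<in>{{3, 5, 6}, {3, 9, 10}, {5, 9, 12}, {6, 10, 12}}. p \<in> l \<longleftrightarrow> swp 5 ` fD p \<subseteq> \<Union>((\<lambda>p. swp 5 ` fD p) ` l)"
      by (simp only: expand) code_simp
  qed
qed
lemma pa1: "inc_iso ({3, 5, 6, 11, 13, 14}::nat set) {l \<in> DT. l \<subseteq> {3, 5, 6, 11, 13, 14}} (\<in>) (G2_points 4) (G2_lines 4) (\<subseteq>)"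
proof -
  have L: "{l \<in> DT. l \<subseteq> {3, 5, 6, 11, 13, 14}} = {{3, 5, 6}, {3, 13, 14}, {5, 11, 14}, {6, 11, 13}}" unfolding DT_def by code_simp
  show ?thesis unfolding L G2p G2l
  proof (rule inc_iso_I[where f="\<lambda>p. swp 4 ` fD p" and g="\<lambda>l. \<Union>((\<lambda>p. swp 4 ` fD p) ` l)"])
    show "bij_betw (\<lambda>p. swp 4 ` fD p) {3, 5, 6, 11, 13, 14} (Set.filter (\<lambda>s. card s = 2) (Pow {1..4}))"
      unfolding bij_betw_def inj_on_def by (simp only: expand) code_simp
    show "bij_betw (\<lambda>l. \<Union>((\<lambda>p. swp 4 ` fD p) ` l)) {{3, 5, 6}, {3, 13, 14}, {5, 11, 14}, {6, 11, 13}} (Set.filter (\<lambda>s. card s = 3) (Pow {1..4}))"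
      unfolding bij_betw_def inj_on_def by (simp only: expand) code_simp
    show "\<forall>p\<in>{3, 5, 6, 11, 13, 14}. \<forall>l\<in>{{3, 5, 6}, {3, 13, 14}, {5, 11, 14}, {6, 11, 13}}. p \<in> l \<longleftrightarrow> swp 4 ` fD p \<subseteq> \<Union>((\<lambda>p. swp 4 ` fD p) ` l)"
      by (simp only: expand) code_simp
  qed
qed
lemma pa2: "inc_iso ({3, 7, 9, 10, 13, 14}::nat set) {l \<in> DT. l \<subseteq> {3, 7, 9, 10, 13, 14}} (\<in>) (G2_points 4) (G2_lines 4) (\<subseteq>)"
proof -
  have L: "{l \<in> DT. l \<subseteq> {3, 7, 9, 10, 13, 14}} = {{3, 9, 10}, {3, 13, 14}, {7, 9, 14}, {7, 10, 13}}" unfolding DT_def by code_simp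
  show ?thesis unfolding L G2p G2l
  proof (rule inc_iso_I[where f="\<lambda>p. swp 3 ` fD p" and g="\<lambda>l. \<Union>((\<lambda>p. swp 3 ` fD p) ` l)"])
    show "bij_betw (\<lambda>p. swp 3 ` fD p) {3, 7, 9, 10, 13, 14} (Set.filter (\<lambda>s. card s = 2) (Pow {1..4}))"
      unfolding bij_betw_def inj_on_def by (simp only: expand) code_simp
    show "bij_betw (\<lambda>l. \<Union>((\<lambda>p. swp 3 ` fD p) ` l)) {{3, 9, 10}, {3, 13, 14}, {7, 9, 14}, {7, 10, 13}} (Set.filter (\<lambda>s. card s = 3) (Pow {1..4}))"
      unfolding bij_betw_def inj_on_def by (simp only: expand) code_simp
    show "\<forall>p\<in>{3, 7, 9, 10, 13, 14}. \<forall>l\<in>{{3, 9, 10}, {3, 13, 14}, {7, 9, 14}, {7, 10, 13}}. p \<in> l \<longleftrightarrow> swp 3 ` fD p \<subseteq> \<Union>((\<lambda>p. swp 3 ` fD p) ` l)"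
      by (simp only: expand) code_simp
  qed
qed
lemma pa3: "inc_iso ({5, 7, 9, 11, 12, 14}::nat set) {l \<in> DT. l \<subseteq> {5, 7, 9, 11, 12, 14}} (\<in>) (G2_points 4) (G2_lines 4) (\<subseteq>)"
proof -
  have L: "{l \<in> DT. l \<subseteq> {5, 7, 9, 11, 12, 14}} = {{5, 9, 12}, {5, 11, 14}, {7, 9, 14}, {7, 11, 12}}" unfolding DT_def by code_simp
  show ?thesis unfolding L G2p G2l
  proof (rule inc_iso_I[where f="\<lambda>p. swp 2 ` fD p" and g="\<lambda>l. \<Union>((\<lambda>p. swp 2 ` fD p) ` l)"])
    show "bij_betw (\<lambda>p. swp 2 ` fD p) {5, 7, 9, 11, 12, 14} (Set.filter (\<lambda>s. card s = 2) (Pow {1..4}))"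
      unfolding bij_betw_def inj_on_def by (simp only: expand) code_simp
    show "bij_betw (\<lambda>l. \<Union>((\<lambda>p. swp 2 ` fD p) ` l)) {{5, 9, 12}, {5, 11, 14}, {7, 9, 14}, {7, 11, 12}} (Set.filter (\<lambda>s. card s = 3) (Pow {1..4}))"
      unfolding bij_betw_def inj_on_def by (simp only: expand) code_simp
    show "\<forall>p\<in>{5, 7, 9, 11, 12, 14}. \<forall>l\<in>{{5, 9, 12}, {5, 11, 14}, {7, 9, 14}, {7, 11, 12}}. p \<in> l \<longleftrightarrow> swp 2 ` fD p \<subseteq> \<Union>((\<lambda>p. swp 2 ` fD p) ` l)"
      by (simp only: expand) code_simp
  qed
qed
lemma pa4: "inc_iso ({6, 7, 10, 11, 12, 13}::nat set) {l \<in> DT. l \<subseteq> {6, 7, 10, 11, 12, 13}} (\<in>) (G2_points 4) (G2_lines 4) (\<subseteq>)"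
proof -
  have L: "{l \<in> DT. l \<subseteq> {6, 7, 10, 11, 12, 13}} = {{6, 10, 12}, {6, 11, 13}, {7, 10, 13}, {7, 11, 12}}" unfolding DT_def by code_simp
  show ?thesis unfolding L G2p G2l
  proof (rule inc_iso_I[where f="\<lambda>p. swp 1 ` fD p" and g="\<lambda>l. \<Union>((\<lambda>p. swp 1 ` fD p) ` l)"])
    show "bij_betw (\<lambda>p. swp 1 ` fD p) {6, 7, 10, 11, 12, 13} (Set.filter (\<lambda>s. card s = 2) (Pow {1..4}))"
      unfolding bij_betw_def inj_on_def by (simp only: expand) code_simp
    show "bij_betw (\<lambda>l. \<Union>((\<lambda>p. swp 1 ` fD p) ` l)) {{6, 10, 12}, {6, 11, 13}, {7, 10, 13}, {7, 11, 12}} (Set.filter (\<lambda>s. card s = 3) (Pow {1..4}))"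
      unfolding bij_betw_def inj_on_def by (simp only: expand) code_simp
    show "\<forall>p\<in>{6, 7, 10, 11, 12, 13}. \<forall>l\<in>{{6, 10, 12}, {6, 11, 13}, {7, 10, 13}, {7, 11, 12}}. p \<in> l \<longleftrightarrow> swp 1 ` fD p \<subseteq> \<Union>((\<lambda>p. swp 1 ` fD p) ` l)"
      by (simp only: expand) code_simp
  qed
qed

lemma cardsHS: "card ({3, 5, 6, 7}::nat set) = 4" "card ({3, 7, 11, 12}::nat set) = 4" "card ({3, 9, 10, 11}::nat set) = 4" "card ({3, 12, 13, 14}::nat set) = 4" "card ({5, 7, 10, 13}::nat set) = 4" "card ({5, 9, 12, 13}::nat set) = 4" "card ({5, 10, 11, 14}::nat set) = 4" "card ({6, 7, 9, 14}::nat set) = 4" "card ({6, 9, 11, 13}::nat set) = 4" "card ({6, 10, 12, 14}::nat set) = 4" "card ({3, 5, 6, 9, 10, 12}::nat set) = 6" "card ({3, 5, 6, 11, 13, 14}::nat set) = 6" "card ({3, 7, 9, 10, 13, 14}::nat set) = 6" "card ({5, 7, 9, 11, 12, 14}::nat set) = 6" "card ({6, 7, 10, 11, 12, 13}::nat set) = 6" by simp_all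

lemma pasch: "\<forall>H\<in>HS. card H = 6 \<longrightarrow> inc_iso H {l \<in> DT. l \<subseteq> H} (\<in>) (G2_points 4) (G2_lines 4) (\<subseteq>)"
proof -
  have n: "((4::nat) = 6) = False" by simp
  show ?thesis unfolding HS_def by (simp only: ball_ins ball_emp cardsHS n pa0 pa1 pa2 pa3 pa4 simp_thms)
qed

lemma sed_eq: "sed_def_triples = DT" unfolding sed_def_triples_def DT_eq ..

theorem mainTheorem2:
  shows
   "{a \<in> {1..15}. \<not> (\<exists>t. defective_triple 4 t \<and> a \<in> t)} = {1, 2, 4, 8, 15}
    \<and> (\<forall>a \<in> {3, 5, 6, 7, 9, 10, 11, 12, 13, 14}.
          card {t. defective_triple 4 t \<and> a \<in> t} = 3 \<and>
          card {t. ordinary_triple 4 t \<and> a \<in> t} = 4)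
    \<and> inc_iso D_points sed_def_triples (\<in>) (G2_points 5) (G2_lines 5) (\<subseteq>)
    \<and> (\<exists>\<phi>. bij_betw \<phi> (hyperplanes D_points sed_def_triples) {1..15}
         \<and> bij_betw (\<lambda>V. \<phi> ` V) (veldkamp_lines D_points sed_def_triples)
                   {t. dist_triple 4 t}
         \<and> (\<forall>H \<in> hyperplanes D_points sed_def_triples.
              (card H = 4 \<longleftrightarrow> (\<exists>t. defective_triple 4 t \<and> \<phi> H \<in> t))
            \<and> (card H = 6 \<longleftrightarrow> \<phi> H \<in> {1, 2, 4, 8, 15})
            \<and> (card H = 4 \<longrightarrow> (\<exists>p\<in>H. H = insert p
                   {q \<in> D_points. q \<noteq> p \<and> \<not> collinear sed_def_triples p q}))
            \<and> (card H = 6 \<longrightarrow> inc_iso H {l \<in> sed_def_triples. l \<subseteq> H} (\<in>)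
                   (G2_points 4) (G2_lines 4) (\<subseteq>))))"
proof (intro conjI)
  show "{a \<in> {1..15}. \<not> (\<exists>t. defective_triple 4 t \<and> a \<in> t)} = {1, 2, 4, 8, 15}" by (rule part1)
  show "\<forall>a \<in> {3, 5, 6, 7, 9, 10, 11, 12, 13, 14}.
          card {t. defective_triple 4 t \<and> a \<in> t} = 3 \<and>
          card {t. ordinary_triple 4 t \<and> a \<in> t} = 4" by (rule part2)
  show "inc_iso D_points sed_def_triples (\<in>) (G2_points 5) (G2_lines 5) (\<subseteq>)" by (rule part3)
  show "\<exists>\<phi>. bij_betw \<phi> (hyperplanes D_points sed_def_triples) {1..15}
         \<and> bij_betw (\<lambda>V. \<phi> ` V) (veldkamp_lines D_points sed_def_triples)
                   {t. dist_triple 4 t}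
         \<and> (\<forall>H \<in> hyperplanes D_points sed_def_triples.
              (card H = 4 \<longleftrightarrow> (\<exists>t. defective_triple 4 t \<and> \<phi> H \<in> t))
            \<and> (card H = 6 \<longleftrightarrow> \<phi> H \<in> {1, 2, 4, 8, 15})
            \<and> (card H = 4 \<longrightarrow> (\<exists>p\<in>H. H = insert p
                   {q \<in> D_points. q \<noteq> p \<and> \<not> collinear sed_def_triples p q}))
            \<and> (card H = 6 \<longrightarrow> inc_iso H {l \<in> sed_def_triples. l \<subseteq> H} (\<in>)
                   (G2_points 4) (G2_lines 4) (\<subseteq>)))"
  proof (intro exI[of _ phi] conjI)
    show "bij_betw phi (hyperplanes D_points sed_def_triples) {1..15}"
      unfolding DP_eq sed_eq HS_eq by (rule part4a)
    show "bij_betw (\<lambda>V. phi ` V) (veldkamp_lines D_points sed_def_triples) {t. dist_triple 4 t}"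
      unfolding DP_eq sed_eq TT_eq by (rule part4b)
    show "\<forall>H \<in> hyperplanes D_points sed_def_triples.
              (card H = 4 \<longleftrightarrow> (\<exists>t. defective_triple 4 t \<and> phi H \<in> t))
            \<and> (card H = 6 \<longleftrightarrow> phi H \<in> {1, 2, 4, 8, 15})
            \<and> (card H = 4 \<longrightarrow> (\<exists>p\<in>H. H = insert p
                   {q \<in> D_points. q \<noteq> p \<and> \<not> collinear sed_def_triples p q}))
            \<and> (card H = 6 \<longrightarrow> inc_iso H {l \<in> sed_def_triples. l \<subseteq> H} (\<in>)
                   (G2_points 4) (G2_lines 4) (\<subseteq>))"
      unfolding DP_eq sed_eq HS_eq ex_def collinear_def
    proof (intro ballI conjI impI)
      fix H assume H: "H \<in> HS"
      note c = part4c[rule_format, OF H]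
      show "card H = 4 \<longleftrightarrow> (\<exists>t\<in>DT. phi H \<in> t)" using c by (rule conjunct1)
      show "card H = 6 \<longleftrightarrow> phi H \<in> {1, 2, 4, 8, 15}" using c by (rule conjunct2[THEN conjunct1])
      show "\<exists>p\<in>H. H = insert p {q \<in> DP. q \<noteq> p \<and> \<not> (\<exists>l\<in>DT. p \<in> l \<and> q \<in> l)}" if "card H = 4"
      proof -
        have "card H = 4 \<longrightarrow> phi H \<in> H \<and> H = insert (phi H) {q \<in> DP. q \<noteq> phi H \<and> \<not> (\<exists>l\<in>DT. phi H \<in> l \<and> q \<in> l)}"
          using c by (rule conjunct2[THEN conjunct2])
        then have h: "phi H \<in> H" "H = insert (phi H) {q \<in> DP. q \<noteq> phi H \<and> \<not> (\<exists>l\<in>DT. phi H \<in> l \<and> q \<in> l)}"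
          using that by blast+
        show ?thesis apply (rule bexI[where x="phi H"]) apply (rule h(2)) by (rule h(1))
      qed
      show "inc_iso H {l \<in> DT. l \<subseteq> H} (\<in>) (G2_points 4) (G2_lines 4) (\<subseteq>)" if "card H = 6"
        using bspec[OF pasch H] that by (rule mp)
    qed
  qed
qed

end
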